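(* Let $T$ be a balanced tree. Then $T$ is unmixed if and only if (1) $\mathrm{height}(T)\le 3$, (2) for all $v\in V_2$, $|N(v)\cap V_1|=1$, and (3) for all $v\in V_1$, $|N(v)\cap V_2|\le 1$.
   Context: $N(v)=\{u: uv\in E\}$, $N(D)=\bigcup_{v\in D}N(v)$. A leaf is a vertex of degree 1; the height of a vertex is its minimal distance to a leaf (an isolated vertex has height 0); $V_k$ is the set of vertices of height $k$; $\mathrm{height}(T)=\max\{k:V_k\neq\emptyset\}$. A tree is balanced if no two adjacent vertices have the same height. A TD-set is $D\subseteq V$ with $N(D)=V$, minimal if no proper subset is a TD-set; $T$ is unmixed if all minimal TD-sets have the same size. *)

theory Defs
  imports Main
begin

definition simple_graph :: "'a set \<Rightarrow> 'a set set \<Rightarrow> bool" where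
  "simple_graph V E \<longleftrightarrow> finite V \<and> (\<forall>e\<in>E. \<exists>u v. e = {u, v} \<and> u \<noteq> v \<and> u \<in> V \<and> v \<in> V)"

definition nbhd :: "'a set \<Rightarrow> 'a set set \<Rightarrow> 'a \<Rightarrow> 'a set" where
  "nbhd V E v = {u \<in> V. {u, v} \<in> E}"

definition nbhd_set :: "'a set \<Rightarrow> 'a set set \<Rightarrow> 'a set \<Rightarrow> 'a set" where
  "nbhd_set V E D = (\<Union>v\<in>D. nbhd V E v)"

definition is_walk :: "'a set \<Rightarrow> 'a set set \<Rightarrow> 'a list \<Rightarrow> bool" where
  "is_walk V E xs \<longleftrightarrow> xs \<noteq> [] \<and> set xs \<subseteq> V \<and>
     (\<forall>i. Suc i < length xs \<longrightarrow> {xs ! i, xs ! Suc i} \<in> E)"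

definition connected_graph :: "'a set \<Rightarrow> 'a set set \<Rightarrow> bool" where
  "connected_graph V E \<longleftrightarrow>
     (\<forall>u\<in>V. \<forall>v\<in>V. \<exists>xs. is_walk V E xs \<and> hd xs = u \<and> last xs = v)"

definition is_cycle :: "'a set \<Rightarrow> 'a set set \<Rightarrow> 'a list \<Rightarrow> bool" where
  "is_cycle V E xs \<longleftrightarrow> is_walk V E xs \<and> length xs \<ge> 3 \<and> distinct xs \<and> {last xs, hd xs} \<in> E"

definition is_tree :: "'a set \<Rightarrow> 'a set set \<Rightarrow> bool" where
  "is_tree V E \<longleftrightarrow> simple_graph V E \<and> V \<noteq> {} \<and> connected_graph V E \<and>
     (\<nexists>xs. is_cycle V E xs)"

definition is_leaf :: "'a set \<Rightarrow> 'a set set \<Rightarrow> 'a \<Rightarrow> bool" where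
  "is_leaf V E v \<longleftrightarrow> v \<in> V \<and> card (nbhd V E v) = 1"

definition dist :: "'a set \<Rightarrow> 'a set set \<Rightarrow> 'a \<Rightarrow> 'a \<Rightarrow> nat" where
  "dist V E u v = (LEAST n. \<exists>xs. is_walk V E xs \<and> hd xs = u \<and> last xs = v \<and> length xs = Suc n)"

definition vheight :: "'a set \<Rightarrow> 'a set set \<Rightarrow> 'a \<Rightarrow> nat" where
  "vheight V E v = (if nbhd V E v = {} then 0
                    else (LEAST k. \<exists>l. is_leaf V E l \<and> dist V E v l = k))"

definition height_class :: "'a set \<Rightarrow> 'a set set \<Rightarrow> nat \<Rightarrow> 'a set" where
  "height_class V E k = {v \<in> V. vheight V E v = k}"

definition tree_height :: "'a set \<Rightarrow> 'a set set \<Rightarrow> nat" where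
  "tree_height V E = Max {k. height_class V E k \<noteq> {}}"

definition balanced :: "'a set \<Rightarrow> 'a set set \<Rightarrow> bool" where
  "balanced V E \<longleftrightarrow> (\<forall>u\<in>V. \<forall>v\<in>V. {u, v} \<in> E \<longrightarrow> vheight V E u \<noteq> vheight V E v)"

definition td_set :: "'a set \<Rightarrow> 'a set set \<Rightarrow> 'a set \<Rightarrow> bool" where
  "td_set V E D \<longleftrightarrow> D \<subseteq> V \<and> nbhd_set V E D = V"

definition minimal_td_set :: "'a set \<Rightarrow> 'a set set \<Rightarrow> 'a set \<Rightarrow> bool" where
  "minimal_td_set V E D \<longleftrightarrow> td_set V E D \<and> (\<forall>D'. D' \<subset> D \<longrightarrow> \<not> td_set V E D')"

definition unmixed :: "'a set \<Rightarrow> 'a set set \<Rightarrow> bool" where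
  "unmixed V E \<longleftrightarrow> (\<forall>D1 D2. minimal_td_set V E D1 \<and> minimal_td_set V E D2 \<longrightarrow> card D1 = card D2)"

end

theory Submission
  imports Defs
begin



fun wlk :: "'a set \<Rightarrow> 'a set set \<Rightarrow> 'a list \<Rightarrow> bool" where
  "wlk V E [] = False"
| "wlk V E [a] = (a \<in> V)"
| "wlk V E (a # b # xs) = ({a,b} \<in> E \<and> a \<in> V \<and> wlk V E (b # xs))"

lemma is_walk_wlk: "is_walk V E xs \<longleftrightarrow> wlk V E xs"
proof (induction xs rule: wlk.induct)
  case (1 V E) then show ?case by (simp add: is_walk_def)
next
  case (2 V E a) then show ?case by (simp add: is_walk_def)
next
  case (3 V E a b xs)
  have "is_walk V E (a # b # xs) \<longleftrightarrow> {a,b} \<in> E \<and> a \<in> V \<and> is_walk V E (b # xs)"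
  proof
    assume H: "is_walk V E (a # b # xs)"
    have all: "\<forall>i. Suc i < length (a # b # xs) \<longrightarrow> {(a # b # xs) ! i, (a # b # xs) ! Suc i} \<in> E"
      using H unfolding is_walk_def by blast
    have "{a,b} \<in> E" using spec[OF all, of 0] by simp
    moreover have "a \<in> V" using H unfolding is_walk_def by simp
    moreover have "is_walk V E (b # xs)" unfolding is_walk_def
    proof (intro conjI allI impI)
      show "set (b # xs) \<subseteq> V" using H unfolding is_walk_def by auto
      fix i assume "Suc i < length (b # xs)"
      then show "{(b # xs) ! i, (b # xs) ! Suc i} \<in> E" using spec[OF all, of "Suc i"] by simp
    qed simp
    ultimately show "{a,b} \<in> E \<and> a \<in> V \<and> is_walk V E (b # xs)" by blast
  next
    assume H: "{a,b} \<in> E \<and> a \<in> V \<and> is_walk V E (b # xs)"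
    show "is_walk V E (a # b # xs)" unfolding is_walk_def
    proof (intro conjI allI impI)
      show "a # b # xs \<noteq> []" by simp
      show "set (a # b # xs) \<subseteq> V" using H unfolding is_walk_def by auto
      fix i assume i: "Suc i < length (a # b # xs)"
      show "{(a # b # xs) ! i, (a # b # xs) ! Suc i} \<in> E"
      proof (cases i)
        case 0 then show ?thesis using H by simp
      next
        case (Suc j)
        then show ?thesis using H i unfolding is_walk_def by auto
      qed
    qed
  qed
  then show ?case using 3 by simp
qed

lemma wlk_ne: "wlk V E xs \<Longrightarrow> xs \<noteq> []" by (cases xs) auto

lemma wlk_set: "wlk V E xs \<Longrightarrow> set xs \<subseteq> V"
  by (induction xs rule: wlk.induct) auto

lemma wlk_Cons: "wlk V E xs \<Longrightarrow> {a, hd xs} \<in> E \<Longrightarrow> a \<in> V \<Longrightarrow> wlk V E (a # xs)"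
  by (cases xs) auto

lemma wlk_append: "wlk V E xs \<Longrightarrow> wlk V E ys \<Longrightarrow> {last xs, hd ys} \<in> E \<Longrightarrow> wlk V E (xs @ ys)"
proof (induction xs rule: wlk.induct)
  case (2 V E a) then show ?case by (cases ys) auto
next
  case (3 V E a b xs) then show ?case by auto
qed auto

lemma wlk_append_same: "wlk V E xs \<Longrightarrow> wlk V E ys \<Longrightarrow> last xs = hd ys \<Longrightarrow> wlk V E (xs @ tl ys)"
proof (induction xs rule: wlk.induct)
  case (2 V E a) then show ?case by (cases ys) auto
next
  case (3 V E a b xs) then show ?case by auto
qed auto

lemma wlk_appendD1: "wlk V E (xs @ ys) \<Longrightarrow> xs \<noteq> [] \<Longrightarrow> wlk V E xs"
proof (induction xs rule: wlk.induct)
  case (2 V E a) then show ?case by (cases ys) auto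
next
  case (3 V E a b xs) then show ?case by auto
qed auto

lemma wlk_appendD2: "wlk V E (xs @ ys) \<Longrightarrow> ys \<noteq> [] \<Longrightarrow> wlk V E ys"
proof (induction xs)
  case Nil then show ?case by simp
next
  case (Cons a xs) then show ?case by (cases xs; cases ys) auto
qed

lemma wlk_rev: "(\<And>a b. {a,b} = {b,a}) \<Longrightarrow> wlk V E xs \<Longrightarrow> wlk V E (rev xs)"
proof (induction xs rule: wlk.induct)
  case (3 V E a b xs)
  then have "wlk V E (rev (b # xs))" by simp
  moreover have "wlk V E [a]" using 3 by simp
  moreover have "last (rev (b # xs)) = b" by simp
  ultimately have "wlk V E (rev (b # xs) @ [a])"
    using 3 by (intro wlk_append) (auto simp: insert_commute)
  then show ?case by simp
qed auto

lemma wlk_shortcut: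
  assumes "wlk V E xs"
  shows "\<exists>ys. wlk V E ys \<and> hd ys = hd xs \<and> last ys = last xs \<and> distinct ys \<and> set ys \<subseteq> set xs"
  using assms
proof (induction "length xs" arbitrary: xs rule: less_induct)
  case less
  show ?case
  proof (cases "distinct xs")
    case True then show ?thesis using less.prems by blast
  next
    case False
    then obtain as y bs cs where xs: "xs = as @ [y] @ bs @ [y] @ cs"
      using not_distinct_decomp by blast
    let ?zs = "as @ [y] @ cs"
    have w1: "wlk V E (as @ [y])" using less.prems xs
      by (metis append.assoc snoc_eq_iff_butlast wlk_appendD1)
    have w2: "wlk V E ([y] @ cs)" using less.prems xs
      by (metis append.assoc append_Cons list.distinct(1) wlk_appendD2)
    have "wlk V E ((as @ [y]) @ tl ([y] @ cs))"
      using w1 w2 by (intro wlk_append_same) auto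
    then have wz: "wlk V E ?zs" by simp
    have "length ?zs < length xs" using xs by simp
    then obtain ys where ys: "wlk V E ys \<and> hd ys = hd ?zs \<and> last ys = last ?zs \<and> distinct ys \<and> set ys \<subseteq> set ?zs"
      using less.hyps wz by blast
    have "hd ?zs = hd xs" using xs by (cases as) auto
    moreover have "last ?zs = last xs" using xs by (cases cs) auto
    moreover have "set ?zs \<subseteq> set xs" using xs by auto
    ultimately show ?thesis using ys by auto
  qed
qed




locale btree =
  fixes V :: "'a set" and E :: "'a set set"
  assumes tree: "is_tree V E" and bal: "balanced V E" and ne: "E \<noteq> {}"
begin

abbreviation nb where "nb \<equiv> nbhd V E"
abbreviation h where "h \<equiv> vheight V E"
abbreviation W where "W \<equiv> wlk V E"

lemma finV: "finite V" using tree unfolding is_tree_def simple_graph_def by blast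

lemma edge: "{a,b} \<in> E \<Longrightarrow> a \<in> V \<and> b \<in> V \<and> a \<noteq> b"
proof -
  assume e: "{a,b} \<in> E"
  then obtain u v where "{a,b} = {u,v}" "u \<noteq> v" "u \<in> V" "v \<in> V"
    using tree unfolding is_tree_def simple_graph_def by blast
  then show ?thesis by (auto simp: doubleton_eq_iff)
qed

lemma edge_sym: "{a,b} \<in> E \<Longrightarrow> {b,a} \<in> E" by (simp add: insert_commute)

lemma nb_iff: "a \<in> nb b \<longleftrightarrow> {a,b} \<in> E"
  using edge unfolding nbhd_def by auto

lemma nb_sym: "a \<in> nb b \<longleftrightarrow> b \<in> nb a"
  by (simp add: nb_iff insert_commute)

lemma nb_sub: "nb v \<subseteq> V" unfolding nbhd_def by auto

lemma fin_nb: "finite (nb v)" using finV nb_sub finite_subset by blast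

lemma nb_irrefl: "a \<notin> nb a" using edge nb_iff by blast

lemma conn: "u \<in> V \<Longrightarrow> v \<in> V \<Longrightarrow> \<exists>xs. W xs \<and> hd xs = u \<and> last xs = v"
  using tree unfolding is_tree_def connected_graph_def by (auto simp: is_walk_wlk)

lemma wrev: "W xs \<Longrightarrow> W (rev xs)"
  by (rule wlk_rev) (auto simp: insert_commute)

lemma no_detour:
  assumes "{v,a} \<in> E" "{v,b} \<in> E" "a \<noteq> b" "W xs" "hd xs = a" "last xs = b" "v \<notin> set xs"
  shows False
proof -
  obtain ys where ys: "W ys" "hd ys = a" "last ys = b" "distinct ys" "set ys \<subseteq> set xs"
    using wlk_shortcut[OF assms(4)] assms(5,6) by auto
  have vys: "v \<notin> set ys" using ys(5) assms(7) by blast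
  have "ys \<noteq> []" using ys(1) wlk_ne by blast
  have len: "length ys \<ge> 2"
  proof (rule ccontr)
    assume "\<not> length ys \<ge> 2"
    then obtain c where "ys = [c]" using \<open>ys \<noteq> []\<close>
      by (cases ys; cases "tl ys") auto
    then show False using ys assms(3) by simp
  qed
  have vV: "v \<in> V" using edge assms(1) by blast
  have "W (v # ys)" using wlk_Cons[OF ys(1)] ys(2) assms(1) vV by simp
  moreover have "{last (v # ys), hd (v # ys)} \<in> E"
    using ys(3) \<open>ys \<noteq> []\<close> assms(2) by (simp add: insert_commute)
  moreover have "distinct (v # ys)" using ys(4) vys by simp
  moreover have "length (v # ys) \<ge> 3" using len by simp
  ultimately have "is_cycle V E (v # ys)" unfolding is_cycle_def by (simp add: is_walk_wlk)
  then show False using tree unfolding is_tree_def by blast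
qed

lemma ex_edge: "\<exists>a b. {a,b} \<in> E"
proof -
  obtain e where e: "e \<in> E" using ne by blast
  have "\<forall>e\<in>E. \<exists>u v. e = {u, v} \<and> u \<noteq> v \<and> u \<in> V \<and> v \<in> V"
    using tree unfolding is_tree_def simple_graph_def by blast
  then obtain u v where "e = {u,v}" using e by blast
  then show ?thesis using e by blast
qed

lemma nb_ne: "v \<in> V \<Longrightarrow> nb v \<noteq> {}"
proof -
  assume v: "v \<in> V"
  obtain a b where ab: "{a,b} \<in> E" using ex_edge by blast
  then have "a \<noteq> b" "a \<in> V" "b \<in> V" using edge by auto
  then obtain c where c: "c \<in> V" "c \<noteq> v" by blast
  obtain xs where xs: "W xs" "hd xs = v" "last xs = c" using conn[OF v c(1)] by blast
  then obtain ys where ys: "xs = v # ys" by (cases xs) auto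
  with xs c have "ys \<noteq> []" by auto
  then have "{v, hd ys} \<in> E" using xs(1) ys by (cases ys) auto
  then have "hd ys \<in> nb v" using nb_iff edge_sym by blast
  then show ?thesis by blast
qed

lemma leaf_nb: "is_leaf V E l \<Longrightarrow> \<exists>u. nb l = {u}"
  unfolding is_leaf_def by (simp add: card_1_singleton_iff)

lemma leaf_exists: "\<exists>l. is_leaf V E l"
proof -
  obtain a b where ab: "{a,b} \<in> E" using ex_edge by blast
  let ?P = "\<lambda>xs. W xs \<and> distinct xs \<and> length xs \<ge> 2"
  have Pab: "?P [a,b]" using ab edge by auto
  have bnd: "\<forall>xs. ?P xs \<longrightarrow> length xs < Suc (card V)"
  proof (intro allI impI)
    fix xs assume "?P xs"
    then have c1: "card (set xs) = length xs" and "set xs \<subseteq> V" using distinct_card wlk_set[of V E xs] by auto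
    then have "card (set xs) \<le> card V" using card_mono[OF finV] by blast
    then show "length xs < Suc (card V)" using c1 by linarith
  qed
  obtain xs where xs: "?P xs" and mx: "\<forall>ys. ?P ys \<longrightarrow> length ys \<le> length xs"
    using ex_has_greatest_nat[of ?P "[a,b]" length "Suc (card V)"] Pab bnd by blast
  obtain rs p q where xsd: "xs = rs @ [p, q]"
  proof -
    have "length (rev xs) \<ge> 2" using xs by simp
    then obtain q p rr where "rev xs = q # p # rr" by (cases "rev xs"; cases "tl (rev xs)") auto
    then have "xs = rev rr @ [p, q]" by (metis append.assoc append_Cons append_Nil rev.simps(2) rev_rev_ident)
    then show ?thesis using that by blast
  qed
  have wpq: "W [p,q]" using xs xsd wlk_appendD2 by blast
  then have pq: "{p,q} \<in> E" by simp
  have "nb q = {p}"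
  proof
    show "{p} \<subseteq> nb q" using pq nb_iff by auto
    show "nb q \<subseteq> {p}"
    proof
      fix c assume c: "c \<in> nb q"
      then have qc: "{q,c} \<in> E" using nb_iff by (simp add: insert_commute)
      show "c \<in> {p}"
      proof (rule ccontr)
        assume cp: "c \<notin> {p}"
        show False
        proof (cases "c \<in> set xs")
          case False
          have "W (xs @ [c])" using xs qc edge xsd by (intro wlk_append) auto
          then have "?P (xs @ [c])" using xs False by auto
          then show False using mx by fastforce
        next
          case True
          have "c \<noteq> q" using qc edge by blast
          then have "c \<in> set rs" using True cp xsd by auto
          then obtain r1 r2 where rs: "rs = r1 @ c # r2" by (meson split_list)
          have "W ((c # r2 @ [p]) @ [q])" using xs xsd rs
            by (metis append.assoc append_Cons append_Nil list.distinct(1) wlk_appendD2)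
          then have wc: "W (c # r2 @ [p])" by (rule wlk_appendD1) simp
          have "q \<notin> set (c # r2 @ [p])" using xs xsd rs by auto
          moreover have "{q,p} \<in> E" using pq edge_sym by blast
          moreover have "c \<noteq> p" using cp by blast
          ultimately show False
            using no_detour[of q c p "c # r2 @ [p]"] qc wc by simp
        qed
      qed
    qed
  qed
  moreover have "q \<in> V" using pq edge by blast
  ultimately show ?thesis unfolding is_leaf_def by auto
qed

end



context btree begin

abbreviation d where "d \<equiv> dist V E"

lemma dist_le: "W xs \<Longrightarrow> hd xs = u \<Longrightarrow> last xs = v \<Longrightarrow> d u v \<le> length xs - 1"
proof -
  assume a: "W xs" "hd xs = u" "last xs = v"
  then have "xs \<noteq> []" using wlk_ne by blast
  then have "length xs = Suc (length xs - 1)" by simp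
  then have "\<exists>ys. is_walk V E ys \<and> hd ys = u \<and> last ys = v \<and> length ys = Suc (length xs - 1)"
    using a by (auto simp: is_walk_wlk)
  then show ?thesis unfolding dist_def by (rule Least_le)
qed

lemma dist_ex: "u \<in> V \<Longrightarrow> v \<in> V \<Longrightarrow> \<exists>xs. W xs \<and> hd xs = u \<and> last xs = v \<and> length xs = Suc (d u v)"
proof -
  assume uv: "u \<in> V" "v \<in> V"
  obtain xs where xs: "W xs" "hd xs = u" "last xs = v" using conn[OF uv] by blast
  then have "xs \<noteq> []" using wlk_ne by blast
  then have "length xs = Suc (length xs - 1)" by simp
  then have "\<exists>n ys. is_walk V E ys \<and> hd ys = u \<and> last ys = v \<and> length ys = Suc n"
    using xs by (auto simp: is_walk_wlk)
  then have "\<exists>ys. is_walk V E ys \<and> hd ys = u \<and> last ys = v \<and> length ys = Suc (d u v)"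
    unfolding dist_def by (rule LeastI_ex)
  then show ?thesis by (auto simp: is_walk_wlk)
qed

lemma leaf_V: "is_leaf V E l \<Longrightarrow> l \<in> V" unfolding is_leaf_def by blast

lemma h_ex: "v \<in> V \<Longrightarrow> \<exists>l. is_leaf V E l \<and> d v l = h v"
proof -
  assume v: "v \<in> V"
  have hv: "h v = (LEAST k. \<exists>l. is_leaf V E l \<and> d v l = k)"
    using nb_ne[OF v] unfolding vheight_def by simp
  obtain l where "is_leaf V E l" using leaf_exists by blast
  then have "\<exists>k l. is_leaf V E l \<and> d v l = k" by blast
  then have "\<exists>l. is_leaf V E l \<and> d v l = (LEAST k. \<exists>l. is_leaf V E l \<and> d v l = k)"
    by (rule LeastI_ex)
  then show ?thesis using hv by simp
qed

lemma h_le: "v \<in> V \<Longrightarrow> is_leaf V E l \<Longrightarrow> h v \<le> d v l"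
proof -
  assume v: "v \<in> V" and l: "is_leaf V E l"
  have hv: "h v = (LEAST k. \<exists>l. is_leaf V E l \<and> d v l = k)"
    using nb_ne[OF v] unfolding vheight_def by simp
  have "\<exists>l'. is_leaf V E l' \<and> d v l' = d v l" using l by blast
  then show ?thesis unfolding hv by (rule Least_le)
qed

lemma h_leaf: "is_leaf V E l \<Longrightarrow> h l = 0"
proof -
  assume l: "is_leaf V E l"
  then have lV: "l \<in> V" by (rule leaf_V)
  have "W [l]" using lV by simp
  then have "d l l \<le> 0" using dist_le[of "[l]" l l] by simp
  then show ?thesis using h_le[OF lV l] by simp
qed

lemma h0_leaf: "v \<in> V \<Longrightarrow> h v = 0 \<Longrightarrow> is_leaf V E v"
proof -
  assume v: "v \<in> V" and h0: "h v = 0"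
  obtain l where l: "is_leaf V E l" "d v l = 0" using h_ex[OF v] h0 by auto
  obtain xs where xs: "W xs" "hd xs = v" "last xs = l" "length xs = Suc 0"
    using dist_ex[OF v leaf_V[OF l(1)]] l(2) by auto
  then obtain a where "xs = [a]" by (cases xs) auto
  then have "v = l" using xs by simp
  then show ?thesis using l by simp
qed

lemma h_adj_le: "{a,b} \<in> E \<Longrightarrow> h a \<le> Suc (h b)"
proof -
  assume e: "{a,b} \<in> E"
  then have aV: "a \<in> V" and bV: "b \<in> V" using edge by auto
  obtain l where l: "is_leaf V E l" "d b l = h b" using h_ex[OF bV] by blast
  obtain xs where xs: "W xs" "hd xs = b" "last xs = l" "length xs = Suc (d b l)"
    using dist_ex[OF bV leaf_V[OF l(1)]] by blast
  have "W (a # xs)" using xs e aV by (intro wlk_Cons) auto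
  moreover have "last (a # xs) = l" using xs wlk_ne by auto
  ultimately have "d a l \<le> length (a # xs) - 1" by (intro dist_le) auto
  then have "d a l \<le> Suc (h b)" using xs l by simp
  then show ?thesis using h_le[OF aV l(1)] by simp
qed

lemma h_adj: "{a,b} \<in> E \<Longrightarrow> h a = Suc (h b) \<or> h b = Suc (h a)"
proof -
  assume e: "{a,b} \<in> E"
  then have "a \<in> V" "b \<in> V" using edge by auto
  then have "h a \<noteq> h b" using bal e unfolding balanced_def by blast
  moreover have "h a \<le> Suc (h b)" using h_adj_le[OF e] .
  moreover have "h b \<le> Suc (h a)" using h_adj_le[OF edge_sym[OF e]] .
  ultimately show ?thesis by linarith
qed

lemma h_down: "v \<in> V \<Longrightarrow> h v = Suc k \<Longrightarrow> \<exists>n. {v,n} \<in> E \<and> h n = k"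
proof -
  assume v: "v \<in> V" and hv: "h v = Suc k"
  obtain l where l: "is_leaf V E l" "d v l = Suc k" using h_ex[OF v] hv by auto
  obtain xs where xs: "W xs" "hd xs = v" "last xs = l" "length xs = Suc (Suc k)"
    using dist_ex[OF v leaf_V[OF l(1)]] l(2) by auto
  then obtain n ys where xsd: "xs = v # n # ys" by (cases xs; cases "tl xs") auto
  then have e: "{v,n} \<in> E" and wn: "W (n # ys)" using xs by auto
  have "last (n # ys) = l" using xs xsd by auto
  then have "d n l \<le> k" using dist_le[OF wn] xs xsd by simp
  then have "h n \<le> k" using h_le[of n l] l edge e by fastforce
  moreover have "h v \<le> Suc (h n)" using h_adj_le[OF e] .
  ultimately have "h n = k" using hv by simp
  then show ?thesis using e by blast
qed

lemma h_down_nb: "v \<in> V \<Longrightarrow> h v = Suc k \<Longrightarrow> \<exists>n\<in>nb v. h n = k"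
  using h_down nb_iff edge_sym by blast

lemma leaf_unique: "is_leaf V E l \<Longrightarrow> {l,a} \<in> E \<Longrightarrow> {l,b} \<in> E \<Longrightarrow> a = b"
proof -
  assume l: "is_leaf V E l" and a: "{l,a} \<in> E" and b: "{l,b} \<in> E"
  obtain u where u: "nb l = {u}" using leaf_nb[OF l] by blast
  have "a \<in> nb l" "b \<in> nb l" using a b nb_iff edge_sym by blast+
  then show ?thesis using u by auto
qed

lemma other_nb: "v \<in> V \<Longrightarrow> h v \<noteq> 0 \<Longrightarrow> a \<in> nb v \<Longrightarrow> \<exists>b\<in>nb v. b \<noteq> a"
proof (rule ccontr)
  assume v: "v \<in> V" and hv: "h v \<noteq> 0" and a: "a \<in> nb v" and n: "\<not> (\<exists>b\<in>nb v. b \<noteq> a)"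
  then have "nb v = {a}" by blast
  then have "is_leaf V E v" using v unfolding is_leaf_def by simp
  then show False using h_leaf hv by simp
qed

lemma other_adj: "v \<in> V \<Longrightarrow> h v \<noteq> 0 \<Longrightarrow> {v,a} \<in> E \<Longrightarrow> \<exists>b. {v,b} \<in> E \<and> b \<noteq> a"
  using other_nb[of v a] nb_iff edge_sym by blast

lemma leaf_adj_h: "h l = 0 \<Longrightarrow> {l,u} \<in> E \<Longrightarrow> h u = 1"
  using h_adj by fastforce

end



context btree begin

lemma walk_join: "W xs \<Longrightarrow> W ys \<Longrightarrow> last xs = hd ys \<Longrightarrow>
   \<exists>zs. W zs \<and> hd zs = hd xs \<and> last zs = last ys \<and> set zs \<subseteq> set xs \<union> set ys"
proof -
  assume a: "W xs" "W ys" "last xs = hd ys"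
  have xne: "xs \<noteq> []" and yne: "ys \<noteq> []" using a wlk_ne by blast+
  let ?zs = "xs @ tl ys"
  have "W ?zs" using wlk_append_same a by blast
  moreover have "hd ?zs = hd xs" using xne by simp
  moreover have "last ?zs = last ys"
    using a(3) xne yne by (cases ys) auto
  moreover have "set ?zs \<subseteq> set xs \<union> set ys" using yne by (cases ys) auto
  ultimately show ?thesis by blast
qed

lemma hub_conn:
  assumes c: "\<forall>k\<in>K. \<exists>xs. W xs \<and> hd xs = k \<and> last xs = c \<and> set xs \<subseteq> K"
  and k1: "k1 \<in> K" and k2: "k2 \<in> K"
  shows "\<exists>xs. W xs \<and> hd xs = k1 \<and> last xs = k2 \<and> set xs \<subseteq> K"
proof -
  obtain xs where xs: "W xs" "hd xs = k1" "last xs = c" "set xs \<subseteq> K" using c k1 by blast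
  obtain ys where ys: "W ys" "hd ys = k2" "last ys = c" "set ys \<subseteq> K" using c k2 by blast
  have yne: "ys \<noteq> []" using ys wlk_ne by blast
  have "W (rev ys)" using wrev ys by blast
  moreover have "hd (rev ys) = c" using ys yne by (simp add: hd_rev)
  moreover have "last (rev ys) = k2" using ys yne by (simp add: last_rev)
  ultimately obtain zs where "W zs" "hd zs = hd xs" "last zs = last (rev ys)" "set zs \<subseteq> set xs \<union> set (rev ys)"
    using walk_join[OF xs(1), of "rev ys"] xs(3) by metis
  then show ?thesis using xs ys \<open>last (rev ys) = k2\<close> by auto
qed

lemma td_iff: "td_set V E D \<longleftrightarrow> D \<subseteq> V \<and> (\<forall>v\<in>V. \<exists>x\<in>D. {v,x} \<in> E)"
proof -
  have "nbhd_set V E D \<subseteq> V" unfolding nbhd_set_def using nb_sub by blast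
  moreover have "\<And>v. v \<in> nbhd_set V E D \<longleftrightarrow> (\<exists>x\<in>D. {v,x} \<in> E)"
    unfolding nbhd_set_def using nb_iff by blast
  ultimately show ?thesis unfolding td_set_def by blast
qed

lemma td_dom: "td_set V E D \<Longrightarrow> v \<in> V \<Longrightarrow> \<exists>x\<in>D. {v,x} \<in> E"
  by (simp add: td_iff)

lemma td_sub: "td_set V E D \<Longrightarrow> D \<subseteq> V"
  unfolding td_set_def by simp

lemma td_fin: "td_set V E D \<Longrightarrow> finite D"
  using td_sub finV finite_subset by metis

lemma min_exists: "td_set V E C \<Longrightarrow> \<exists>X\<subseteq>C. minimal_td_set V E X"
proof (induction "card C" arbitrary: C rule: less_induct)
  case less
  show ?case
  proof (cases "minimal_td_set V E C")
    case True then show ?thesis by blast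
  next
    case False
    have "\<exists>C'. C' \<subset> C \<and> td_set V E C'"
      using less.prems False unfolding minimal_td_set_def by simp
    then obtain C' where C': "C' \<subset> C" "td_set V E C'" by blast
    have "finite C" using td_fin less.prems by blast
    then have "card C' < card C" using C'(1) psubset_card_mono by blast
    then obtain X where "X \<subseteq> C'" "minimal_td_set V E X" using less.hyps C'(2) by blast
    then show ?thesis using C'(1) by blast
  qed
qed

lemma forced: "td_set V E X \<Longrightarrow> X \<subseteq> C \<Longrightarrow> p \<in> V \<Longrightarrow> nb p \<inter> C = {f} \<Longrightarrow> f \<in> X"
proof -
  assume X: "td_set V E X" and XC: "X \<subseteq> C" and p: "p \<in> V" and f: "nb p \<inter> C = {f}"
  obtain x where x: "x \<in> X" "{p,x} \<in> E" using td_dom[OF X p] by blast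
  then have "x \<in> nb p" using nb_iff edge_sym by blast
  then have "x \<in> nb p \<inter> C" using x XC by blast
  then show ?thesis using f x by auto
qed

lemma swap_not_unmixed:
  assumes C: "td_set V E C" and FC: "F \<subseteq> C" and frc: "\<forall>f\<in>F. \<exists>p\<in>V. nb p \<inter> C = {f}"
  and RF: "R \<subseteq> F" and AV: "A \<subseteq> V" and crd: "card A < card R"
  and cov: "\<forall>v\<in>V. \<forall>r\<in>R. {v,r} \<in> E \<longrightarrow> (\<exists>a\<in>A \<union> (F - R). {v,a} \<in> E)"
  shows "\<not> unmixed V E"
proof
  assume um: "unmixed V E"
  obtain X where XC: "X \<subseteq> C" and Xm: "minimal_td_set V E X" using min_exists[OF C] by blast
  have Xt: "td_set V E X" using Xm unfolding minimal_td_set_def by blast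
  have FX: "F \<subseteq> X"
  proof
    fix f assume "f \<in> F"
    then obtain p where "p \<in> V" "nb p \<inter> C = {f}" using frc by blast
    then show "f \<in> X" using forced[OF Xt XC] by blast
  qed
  let ?X' = "(X - R) \<union> A"
  have XV: "X \<subseteq> V" using Xt td_sub by blast
  have X't: "td_set V E ?X'"
    unfolding td_iff
  proof (intro conjI ballI)
    show "?X' \<subseteq> V" using XV AV by blast
    fix v assume v: "v \<in> V"
    obtain x where x: "x \<in> X" "{v,x} \<in> E" using td_dom[OF Xt v] by blast
    show "\<exists>x\<in>?X'. {v,x} \<in> E"
    proof (cases "x \<in> R")
      case False then show ?thesis using x by blast
    next
      case True
      then obtain a where "a \<in> A \<union> (F - R)" "{v,a} \<in> E" using cov v x by blast
      then show ?thesis using FX by blast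
    qed
  qed
  have finX: "finite X" using finite_subset[OF XV finV] .
  have finA: "finite A" using finite_subset[OF AV finV] .
  have RX: "R \<subseteq> X" using RF FX by blast
  have "card ?X' \<le> card (X - R) + card A" by (rule card_Un_le)
  also have "card (X - R) = card X - card R" using card_Diff_subset[OF finite_subset[OF RX finX] RX] .
  finally have "card ?X' < card X"
    using crd card_mono[OF finX RX] by linarith
  obtain X'' where X''s: "X'' \<subseteq> ?X'" and X''m: "minimal_td_set V E X''" using min_exists[OF X't] by blast
  have "finite ?X'" using finX finA by simp
  then have "card X'' \<le> card ?X'" using card_mono X''s by metis
  then have "card X'' < card X" using \<open>card ?X' < card X\<close> by linarith
  moreover have "card X = card X''" using um Xm X''m unfolding unmixed_def by blast
  ultimately show False by simp
qed

lemma hub_td: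
  assumes C: "C = V - (\<Union>(a,b)\<in>P. nb a - {b})"
  and KV: "K \<subseteq> V" and aK: "\<forall>(a,b)\<in>P. a \<in> K"
  and Kc: "\<forall>k\<in>K. \<exists>xs. W xs \<and> hd xs = k \<and> last xs = c \<and> set xs \<subseteq> K"
  and Kdom: "\<forall>k\<in>K. \<exists>x\<in>C. {k,x} \<in> E"
  and lv: "\<forall>v\<in>V - K. is_leaf V E v \<longrightarrow> (\<forall>n. {v,n} \<in> E \<longrightarrow> n \<in> C)"
  shows "td_set V E C"
  unfolding td_iff
proof (intro conjI ballI)
  show "C \<subseteq> V" using C by blast
  fix v assume v: "v \<in> V"
  show "\<exists>x\<in>C. {v,x} \<in> E"
  proof (cases "v \<in> K")
    case True then show ?thesis using Kdom by blast
  next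
    case vK: False
    obtain n1 where n1: "n1 \<in> nb v" using nb_ne[OF v] by blast
    show ?thesis
    proof (cases "is_leaf V E v")
      case True
      have e1: "{v,n1} \<in> E" using n1 nb_iff edge_sym by blast
      have "\<forall>n. {v,n} \<in> E \<longrightarrow> n \<in> C" using lv v vK True by blast
      then have "n1 \<in> C" using e1 by blast
      then show ?thesis using e1 by blast
    next
      case False
      then have "h v \<noteq> 0" using h0_leaf v by blast
      then obtain n2 where n2: "n2 \<in> nb v" "n2 \<noteq> n1" using other_nb v n1 by blast
      show ?thesis
      proof (rule ccontr)
        assume nC: "\<not> ?thesis"
        have e1: "{v,n1} \<in> E" and e2: "{v,n2} \<in> E" using n1 n2 nb_iff edge_sym by blast+
        have "n1 \<notin> C" "n2 \<notin> C" using nC e1 e2 by blast+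
        moreover have "n1 \<in> V" "n2 \<in> V" using e1 e2 edge by blast+
        ultimately have "n1 \<in> (\<Union>(a,b)\<in>P. nb a - {b})" "n2 \<in> (\<Union>(a,b)\<in>P. nb a - {b})"
          using C by blast+
        then obtain q1 q2 where q1: "q1 \<in> P" "n1 \<in> (case q1 of (a,b) \<Rightarrow> nb a - {b})"
          and q2: "q2 \<in> P" "n2 \<in> (case q2 of (a,b) \<Rightarrow> nb a - {b})" by blast
        obtain a1 b1 a2 b2 where q1d: "q1 = (a1,b1)" and q2d: "q2 = (a2,b2)" by (cases q1; cases q2) auto
        have p1: "(a1,b1) \<in> P" "n1 \<in> nb a1" using q1 q1d by auto
        have p2: "(a2,b2) \<in> P" "n2 \<in> nb a2" using q2 q2d by auto
        have "a1 \<in> K" "a2 \<in> K" using aK p1 p2 by blast+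
        then obtain ws where ws: "W ws" "hd ws = a1" "last ws = a2" "set ws \<subseteq> K"
          using hub_conn[OF Kc] by blast
        have wsne: "ws \<noteq> []" using ws wlk_ne by blast
        have "{n1, a1} \<in> E" using p1 nb_iff by blast
        then have w1: "W ([n1] @ ws)" using ws edge by (intro wlk_append) auto
        have w3: "{last ([n1] @ ws), hd [n2]} \<in> E" using ws wsne p2 nb_iff edge_sym by simp
        have w2: "W [n2]" using e2 edge by simp
        have w: "W (([n1] @ ws) @ [n2])" by (rule wlk_append[OF w1 w2 w3])
        have "v \<notin> set (([n1] @ ws) @ [n2])" using ws vK e1 e2 edge by auto
        then show False using no_detour[OF e1 e2 n2(2)[symmetric] w] by simp
      qed
    qed
  qed
qed

end



context btree begin

lemma nb_h: "x \<in> nb y \<Longrightarrow> h x = Suc (h y) \<or> h y = Suc (h x)"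
  using nb_iff h_adj by blast

lemma forced_pair:
  assumes "C = V - (\<Union>(a,b)\<in>P. nb a - {b})" "(a,b) \<in> P" "b \<in> C" "{a,b} \<in> E"
  shows "nb a \<inter> C = {b}"
proof -
  have "b \<in> nb a" using assms(4) nb_iff edge_sym by blast
  moreover have "\<And>x. x \<in> nb a \<Longrightarrow> x \<in> C \<Longrightarrow> x = b" using assms(1,2) by blast
  ultimately show ?thesis using assms(3) by blast
qed

lemma leaf_below: "u \<in> V \<Longrightarrow> h u = 1 \<Longrightarrow> \<exists>l. {u,l} \<in> E \<and> h l = 0 \<and> is_leaf V E l"
proof -
  assume u: "u \<in> V" "h u = 1"
  obtain l where l: "{u,l} \<in> E" "h l = 0" using h_down[of u 0] u by auto
  then have "is_leaf V E l" using h0_leaf edge by blast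
  then show ?thesis using l by blast
qed

lemma not_cond2:
  assumes w: "w \<in> V" "h w = 2" and u1: "{w,u1} \<in> E" "h u1 = 1" and u2: "{w,u2} \<in> E" "h u2 = 1"
    and u12: "u1 \<noteq> u2"
  shows "\<not> unmixed V E"
proof -
  have u1V: "u1 \<in> V" and u2V: "u2 \<in> V" using u1 u2 edge by blast+
  obtain l1 where l1: "{u1,l1} \<in> E" "h l1 = 0" "is_leaf V E l1" using leaf_below[OF u1V u1(2)] by blast
  obtain l2 where l2: "{u2,l2} \<in> E" "h l2 = 0" "is_leaf V E l2" using leaf_below[OF u2V u2(2)] by blast
  have l1V: "l1 \<in> V" and l2V: "l2 \<in> V" using l1 l2 edge by blast+
  define P where "P = {(u1,l1),(u2,l2)}"
  define C where "C = V - (\<Union>(a,b)\<in>P. nb a - {b})"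
  have Cmem: "\<And>x. x \<in> C \<longleftrightarrow> x \<in> V \<and> (x \<in> nb u1 \<longrightarrow> x = l1) \<and> (x \<in> nb u2 \<longrightarrow> x = l2)"
    unfolding C_def P_def by auto
  have l1C: "l1 \<in> C"
  proof -
    have "l1 \<notin> nb u2"
    proof
      assume "l1 \<in> nb u2"
      then have "{l1,u2} \<in> E" using nb_iff by blast
      then have "u2 = u1" using leaf_unique[OF l1(3)] l1(1) edge_sym by blast
      then show False using u12 by simp
    qed
    then show ?thesis using Cmem l1V by blast
  qed
  have l2C: "l2 \<in> C"
  proof -
    have "l2 \<notin> nb u1"
    proof
      assume "l2 \<in> nb u1"
      then have "{l2,u1} \<in> E" using nb_iff by blast
      then have "u2 = u1" using leaf_unique[OF l2(3)] l2(1) edge_sym by blast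
      then show False using u12 by simp
    qed
    then show ?thesis using Cmem l2V by blast
  qed
  have u1C: "u1 \<in> C"
  proof -
    have "u1 \<notin> nb u1" by (rule nb_irrefl)
    moreover have "u1 \<notin> nb u2" using nb_h u1 u2 by fastforce
    ultimately show ?thesis using Cmem u1V by blast
  qed
  have td: "td_set V E C"
  proof (rule hub_td[OF C_def, of "{u1,w,u2}" w])
    show "{u1,w,u2} \<subseteq> V" using u1V u2V w by blast
    show "\<forall>(a,b)\<in>P. a \<in> {u1,w,u2}" unfolding P_def by blast
    show "\<forall>k\<in>{u1,w,u2}. \<exists>xs. W xs \<and> hd xs = k \<and> last xs = w \<and> set xs \<subseteq> {u1,w,u2}"
    proof
      fix k assume "k \<in> {u1,w,u2}"
      have a: "W [u1,w]" using u1 u1V w edge_sym by simp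
      have b: "W [u2,w]" using u2 u2V w edge_sym by simp
      have c: "W [w]" using w by simp
      show "\<exists>xs. W xs \<and> hd xs = k \<and> last xs = w \<and> set xs \<subseteq> {u1,w,u2}"
        using \<open>k \<in> {u1,w,u2}\<close>
      proof (elim insertE emptyE)
        assume "k = u1" then show ?thesis using a by (intro exI[of _ "[u1,w]"]) auto
      next
        assume "k = w" then show ?thesis using c by (intro exI[of _ "[w]"]) auto
      next
        assume "k = u2" then show ?thesis using b by (intro exI[of _ "[u2,w]"]) auto
      qed
    qed
    show "\<forall>k\<in>{u1,w,u2}. \<exists>x\<in>C. {k,x} \<in> E"
      using l1 l2 l1C l2C u1C u1 edge_sym by blast
    show "\<forall>v\<in>V - {u1,w,u2}. is_leaf V E v \<longrightarrow> (\<forall>n. {v,n} \<in> E \<longrightarrow> n \<in> C)"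
    proof (intro ballI impI allI)
      fix v n assume v: "v \<in> V - {u1,w,u2}" "is_leaf V E v" and e: "{v,n} \<in> E"
      have "h n = 1" using leaf_adj_h[OF h_leaf[OF v(2)] e] .
      then have "n \<notin> nb u1" "n \<notin> nb u2" using nb_h u1 u2 by fastforce+
      then show "n \<in> C" using Cmem e edge by blast
    qed
  qed
  show ?thesis
  proof (rule swap_not_unmixed[OF td, of "{l1,l2}" "{l1,l2}" "{w}"])
    show "{l1,l2} \<subseteq> C" using l1C l2C by blast
    show "\<forall>f\<in>{l1,l2}. \<exists>p\<in>V. nb p \<inter> C = {f}"
      using forced_pair[OF C_def, of u1 l1] forced_pair[OF C_def, of u2 l2] l1C l2C l1 l2 u1V u2V
      unfolding P_def by blast
    show "{l1,l2} \<subseteq> {l1,l2}" by simp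
    show "{w} \<subseteq> V" using w by simp
    have "l1 \<noteq> l2"
    proof
      assume "l1 = l2"
      then have "u1 = u2" using leaf_unique[OF l1(3)] l1(1) l2(1) edge_sym by metis
      then show False using u12 by simp
    qed
    then show "card {w} < card {l1,l2}" by simp
    show "\<forall>v\<in>V. \<forall>r\<in>{l1,l2}. {v,r} \<in> E \<longrightarrow> (\<exists>a\<in>{w} \<union> ({l1,l2} - {l1,l2}). {v,a} \<in> E)"
    proof (intro ballI impI)
      fix v r assume "v \<in> V" "r \<in> {l1,l2}" "{v,r} \<in> E"
      then have "v = u1 \<or> v = u2"
        using leaf_unique[OF l1(3), of u1 v] leaf_unique[OF l2(3), of u2 v] l1 l2 edge_sym by blast
      then show "\<exists>a\<in>{w} \<union> ({l1,l2} - {l1,l2}). {v,a} \<in> E" using u1 u2 edge_sym by blast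
    qed
  qed
qed

end



context btree begin

lemma wlk2: "wlk V E (a # b # xs) \<longleftrightarrow> {a,b} \<in> E \<and> wlk V E (b # xs)"
  using edge by auto

lemma e_nb: "{a,b} \<in> E \<Longrightarrow> a \<in> nb b \<and> b \<in> nb a"
  using nb_iff edge_sym by blast

lemma nb_e: "a \<in> nb b \<Longrightarrow> {a,b} \<in> E \<and> {b,a} \<in> E"
  using nb_iff edge_sym by blast

lemma nb_V: "a \<in> nb b \<Longrightarrow> a \<in> V \<and> b \<in> V"
  using nb_iff edge by blast

lemma not_cond1:
  assumes y: "y \<in> V" "h y = 4"
  shows "\<not> unmixed V E"
proof -
  define Z3 where "Z3 = {z \<in> nb y. h z = 3}"
  define P5 where "P5 = {p \<in> nb y. h p = 5}"
  have nby: "\<And>v. v \<in> nb y \<Longrightarrow> v \<in> Z3 \<or> v \<in> P5"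
    using nb_h y(2) unfolding Z3_def P5_def by fastforce
  have finZ: "finite Z3" unfolding Z3_def using fin_nb by simp
  obtain x where x: "x \<in> Z3" using h_down_nb[of y 3] y unfolding Z3_def by auto
  have Z3V: "\<And>z. z \<in> Z3 \<Longrightarrow> z \<in> V \<and> h z = 3 \<and> {y,z} \<in> E \<and> {z,y} \<in> E"
    unfolding Z3_def using nb_e nb_V by blast
  have P5V: "\<And>p. p \<in> P5 \<Longrightarrow> p \<in> V \<and> h p = 5 \<and> {y,p} \<in> E \<and> {p,y} \<in> E"
    unfolding P5_def using nb_e nb_V by blast
  have "\<forall>z\<in>Z3. \<exists>w. w \<in> nb z \<and> h w = 2" using h_down_nb Z3V by fastforce
  then obtain wz where wz: "\<forall>z\<in>Z3. wz z \<in> nb z \<and> h (wz z) = 2" by metis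
  have "\<forall>z\<in>Z3. \<exists>u. u \<in> nb (wz z) \<and> h u = 1" using h_down_nb[of _ 1] wz nb_V by fastforce
  then obtain uz where uz: "\<forall>z\<in>Z3. uz z \<in> nb (wz z) \<and> h (uz z) = 1" by metis
  have "\<forall>z\<in>Z3. \<exists>l. {uz z,l} \<in> E \<and> h l = 0 \<and> is_leaf V E l" using leaf_below uz nb_V by blast
  then obtain lz where lz: "\<forall>z\<in>Z3. {uz z, lz z} \<in> E \<and> h (lz z) = 0 \<and> is_leaf V E (lz z)" by metis
  have "\<forall>p\<in>P5. \<exists>q. q \<in> nb p \<and> q \<noteq> y"
  proof
    fix p assume p: "p \<in> P5"
    then have "y \<in> nb p" using P5V e_nb by blast
    then show "\<exists>q. q \<in> nb p \<and> q \<noteq> y" using other_nb[of p y] P5V[OF p] by auto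
  qed
  then obtain q where q: "\<forall>p\<in>P5. q p \<in> nb p \<and> q p \<noteq> y" by metis
  have hq: "\<And>p. p \<in> P5 \<Longrightarrow> h (q p) = 4 \<or> h (q p) = 6"
    using q P5V nb_h by fastforce
  have "\<forall>p\<in>P5. \<exists>s. s \<in> nb (q p) \<and> s \<noteq> p"
  proof
    fix p assume p: "p \<in> P5"
    then have "p \<in> nb (q p)" "q p \<in> V" using q nb_sym nb_V by blast+
    moreover have "h (q p) \<noteq> 0" using hq[OF p] by auto
    ultimately show "\<exists>s. s \<in> nb (q p) \<and> s \<noteq> p" using other_nb by blast
  qed
  then obtain s where s: "\<forall>p\<in>P5. s p \<in> nb (q p) \<and> s p \<noteq> p" by metis
  have hs: "\<And>p. p \<in> P5 \<Longrightarrow> h (s p) = 3 \<or> h (s p) = 5 \<or> h (s p) = 7"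
  proof -
    fix p assume p: "p \<in> P5"
    have "h (s p) = Suc (h (q p)) \<or> h (q p) = Suc (h (s p))" using s p nb_h by blast
    then show "h (s p) = 3 \<or> h (s p) = 5 \<or> h (s p) = 7" using hq[OF p] by auto
  qed
  have ezw: "\<And>z. z \<in> Z3 \<Longrightarrow> {z, wz z} \<in> E \<and> {wz z, z} \<in> E" using wz nb_e by blast
  have ewu: "\<And>z. z \<in> Z3 \<Longrightarrow> {wz z, uz z} \<in> E \<and> {uz z, wz z} \<in> E" using uz nb_e by blast
  have eul: "\<And>z. z \<in> Z3 \<Longrightarrow> {uz z, lz z} \<in> E \<and> {lz z, uz z} \<in> E" using lz edge_sym by blast
  have epq: "\<And>p. p \<in> P5 \<Longrightarrow> {p, q p} \<in> E \<and> {q p, p} \<in> E" using q nb_e by blast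
  have eqs: "\<And>p. p \<in> P5 \<Longrightarrow> {q p, s p} \<in> E \<and> {s p, q p} \<in> E" using s nb_e by blast
  have hwz: "\<And>z. z \<in> Z3 \<Longrightarrow> h (wz z) = 2" using wz by blast
  have huz: "\<And>z. z \<in> Z3 \<Longrightarrow> h (uz z) = 1" using uz by blast
  have hlz: "\<And>z. z \<in> Z3 \<Longrightarrow> h (lz z) = 0" using lz by blast
  have Vwz: "\<And>z. z \<in> Z3 \<Longrightarrow> wz z \<in> V" using ezw edge by blast
  have Vuz: "\<And>z. z \<in> Z3 \<Longrightarrow> uz z \<in> V" using ewu edge by blast
  have Vlz: "\<And>z. z \<in> Z3 \<Longrightarrow> lz z \<in> V" using eul edge by blast
  have Vq: "\<And>p. p \<in> P5 \<Longrightarrow> q p \<in> V" using epq edge by blast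
  have Vs: "\<And>p. p \<in> P5 \<Longrightarrow> s p \<in> V" using eqs edge by blast
  have hne: "\<And>a b. {a,b} \<in> E \<Longrightarrow> h a \<noteq> Suc (h b) \<Longrightarrow> h b \<noteq> Suc (h a) \<Longrightarrow> False"
    using h_adj by blast
  have nbE: "\<And>a b. a \<in> nb b \<Longrightarrow> {a,b} \<in> E" using nb_iff by blast
  have uz_inj: "\<And>z z'. z \<in> Z3 \<Longrightarrow> z' \<in> Z3 \<Longrightarrow> uz z = uz z' \<Longrightarrow> z = z'"
  proof (rule ccontr)
    fix z z' assume z: "z \<in> Z3" and z': "z' \<in> Z3" and eq: "uz z = uz z'" and ne: "z \<noteq> z'"
    have w: "W [z, wz z, uz z, wz z', z']"
      using ezw[OF z] ewu[OF z] ewu[OF z'] ezw[OF z'] Z3V[OF z'] eq by (simp del: wlk.simps(3) add: wlk2)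
    have "y \<notin> set [z, wz z, uz z, wz z', z']"
      using y(2) Z3V[OF z] Z3V[OF z'] hwz[OF z] hwz[OF z'] huz[OF z] by auto
    then show False using no_detour[of y z z' "[z, wz z, uz z, wz z', z']"] Z3V[OF z] Z3V[OF z'] ne w by simp
  qed
  have lz_uz: "\<And>z z'. z \<in> Z3 \<Longrightarrow> z' \<in> Z3 \<Longrightarrow> lz z \<in> nb (uz z') \<Longrightarrow> z = z'"
  proof -
    fix z z' assume z: "z \<in> Z3" and z': "z' \<in> Z3" and l: "lz z \<in> nb (uz z')"
    have "{lz z, uz z'} \<in> E" using l nbE by blast
    then have "uz z' = uz z" using leaf_unique[of "lz z" "uz z'" "uz z"] lz z eul[OF z] by blast
    then show "z = z'" using uz_inj[OF z' z] by simp
  qed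
  define P where "P = {(x,y)} \<union> (\<lambda>p. (s p, q p)) ` P5 \<union> (\<lambda>z. (uz z, lz z)) ` Z3"
  define C where "C = V - (\<Union>(a,b)\<in>P. nb a - {b})"
  have Cmem: "\<And>c. c \<in> C \<longleftrightarrow> c \<in> V \<and> (c \<in> nb x \<longrightarrow> c = y) \<and> (\<forall>p\<in>P5. c \<in> nb (s p) \<longrightarrow> c = q p)
      \<and> (\<forall>z\<in>Z3. c \<in> nb (uz z) \<longrightarrow> c = lz z)"
    unfolding C_def P_def by blast
  have hsy: "\<And>p. p \<in> P5 \<Longrightarrow> s p \<noteq> y" using hs y(2) by fastforce
  have yC: "y \<in> C"
  proof -
    have "\<forall>p\<in>P5. y \<in> nb (s p) \<longrightarrow> y = q p"
    proof (intro ballI impI)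
      fix p assume p: "p \<in> P5" and ys: "y \<in> nb (s p)"
      show "y = q p"
      proof (rule ccontr)
        assume ne: "y \<noteq> q p"
        have w: "W [y, s p, q p]" using nb_e[OF ys] eqs[OF p] Vq[OF p] by (simp del: wlk.simps(3) add: wlk2)
        have "p \<notin> set [y, s p, q p]" using s p P5V[OF p] y(2) epq[OF p] edge by auto
        then show False using no_detour[of p y "q p" "[y, s p, q p]"] P5V[OF p] epq[OF p] ne w by simp
      qed
    qed
    moreover have "\<forall>z\<in>Z3. y \<notin> nb (uz z)" using nb_h huz y(2) by fastforce
    ultimately show ?thesis using Cmem y by blast
  qed
  have qC: "\<And>p. p \<in> P5 \<Longrightarrow> q p \<in> C"
  proof -
    fix p assume p: "p \<in> P5"
    have c1: "q p \<in> nb x \<longrightarrow> q p = y"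
    proof
      assume qx: "q p \<in> nb x"
      have w: "W [x, q p, p]" using nb_e[OF qx] epq[OF p] P5V[OF p] by (simp del: wlk.simps(3) add: wlk2)
      have "y \<notin> set [x, q p, p]" using q p P5V[OF p] y(2) Z3V[OF x] by auto
      moreover have "x \<noteq> p" using Z3V[OF x] P5V[OF p] by auto
      ultimately show "q p = y" using no_detour[of y x p "[x, q p, p]"] Z3V[OF x] P5V[OF p] w by simp
    qed
    have c2: "\<forall>p'\<in>P5. q p \<in> nb (s p') \<longrightarrow> q p = q p'"
    proof (intro ballI impI)
      fix p' assume p': "p' \<in> P5" and qs: "q p \<in> nb (s p')"
      show "q p = q p'"
      proof (rule ccontr)
        assume ne: "q p \<noteq> q p'"
        then have pp: "p \<noteq> p'" by blast
        have w: "W [p, q p, s p', q p', p']" using nb_e[OF qs] epq[OF p] eqs[OF p'] epq[OF p'] P5V[OF p']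
          by (simp del: wlk.simps(3) add: wlk2)
        have "y \<notin> set [p, q p, s p', q p', p']" using q p p' P5V[OF p] P5V[OF p'] y(2) hsy[OF p'] by auto
        then show False using no_detour[of y p p' "[p, q p, s p', q p', p']"] P5V[OF p] P5V[OF p'] pp w by simp
      qed
    qed
    have c3: "\<forall>z\<in>Z3. q p \<notin> nb (uz z)" using nb_h huz hq[OF p] by fastforce
    show "q p \<in> C" using Cmem c1 c2 c3 Vq[OF p] by blast
  qed
  have lzC: "\<And>z. z \<in> Z3 \<Longrightarrow> lz z \<in> C"
  proof -
    fix z assume z: "z \<in> Z3"
    have c1: "lz z \<notin> nb x" using nb_h hlz[OF z] Z3V[OF x] by fastforce
    have c2: "\<forall>p\<in>P5. lz z \<notin> nb (s p)"
    proof (intro ballI notI)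
      fix p assume p: "p \<in> P5" and "lz z \<in> nb (s p)"
      then show False using nb_h[of "lz z" "s p"] hlz[OF z] hs[OF p] by auto
    qed
    have c3: "\<forall>z'\<in>Z3. lz z \<in> nb (uz z') \<longrightarrow> lz z = lz z'" using lz_uz z by blast
    show "lz z \<in> C" using Cmem c1 c2 c3 Vlz[OF z] by blast
  qed
  have xC: "x \<in> C"
  proof -
    have c2: "\<forall>p\<in>P5. x \<notin> nb (s p)"
    proof (intro ballI notI)
      fix p assume p: "p \<in> P5" and "x \<in> nb (s p)"
      then show False using nb_h[of x "s p"] Z3V[OF x] hs[OF p] by auto
    qed
    have c3: "\<forall>z\<in>Z3. x \<notin> nb (uz z)" using nb_h huz Z3V[OF x] by fastforce
    show ?thesis using Cmem c2 c3 Z3V[OF x] nb_irrefl by blast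
  qed
  have pC: "\<And>p. p \<in> P5 \<Longrightarrow> p \<in> C"
  proof -
    fix p assume p: "p \<in> P5"
    have c1: "p \<notin> nb x" using nb_h P5V[OF p] Z3V[OF x] by fastforce
    have c2: "\<forall>p'\<in>P5. p \<in> nb (s p') \<longrightarrow> p = q p'"
    proof (intro ballI impI)
      fix p' assume p': "p' \<in> P5" and ps: "p \<in> nb (s p')"
      show "p = q p'"
      proof (cases "p' = p")
        case True
        have "h p = Suc (h (s p)) \<or> h (s p) = Suc (h p)" using ps True nb_h by blast
        then have False using hs[OF p] hq[OF p] P5V[OF p] eqs[OF p] h_adj[of "q p" "s p"] by auto
        then show ?thesis by blast
      next
        case False
        show ?thesis
        proof (rule ccontr)
          assume ne: "p \<noteq> q p'"
          have w: "W [p, s p', q p', p']" using nb_e[OF ps] eqs[OF p'] epq[OF p'] P5V[OF p']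
            by (simp del: wlk.simps(3) add: wlk2)
          have "y \<notin> set [p, s p', q p', p']" using q p' P5V[OF p] P5V[OF p'] y(2) hsy[OF p'] by auto
          then show False using no_detour[of y p p' "[p, s p', q p', p']"] P5V[OF p] P5V[OF p'] False w
            by simp
        qed
      qed
    qed
    have c3: "\<forall>z\<in>Z3. p \<notin> nb (uz z)" using nb_h huz P5V[OF p] by fastforce
    show "p \<in> C" using Cmem c1 c2 c3 P5V[OF p] by blast
  qed
  have zC: "\<And>z. z \<in> Z3 \<Longrightarrow> z \<in> C"
  proof -
    fix z assume z: "z \<in> Z3"
    have c1: "z \<notin> nb x" using nb_h Z3V[OF z] Z3V[OF x] by fastforce
    have c2: "\<forall>p\<in>P5. z \<notin> nb (s p)"
    proof (intro ballI notI)
      fix p assume p: "p \<in> P5" and "z \<in> nb (s p)"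
      then show False using nb_h[of z "s p"] Z3V[OF z] hs[OF p] by auto
    qed
    have c3: "\<forall>z'\<in>Z3. z \<notin> nb (uz z')" using nb_h huz Z3V[OF z] by fastforce
    show "z \<in> C" using Cmem c1 c2 c3 Z3V[OF z] by blast
  qed
  define K where "K = {y, x} \<union> P5 \<union> q ` P5 \<union> s ` P5 \<union> Z3 \<union> wz ` Z3 \<union> uz ` Z3"
  have td: "td_set V E C"
  proof (rule hub_td[OF C_def, of K y])
    show "K \<subseteq> V" unfolding K_def using y Z3V[OF x] P5V Vq Vs Z3V Vwz Vuz by blast
    show "\<forall>(a,b)\<in>P. a \<in> K" unfolding P_def K_def using x by blast
    show "\<forall>k\<in>K. \<exists>xs. W xs \<and> hd xs = k \<and> last xs = y \<and> set xs \<subseteq> K"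
    proof
      fix k assume k: "k \<in> K"
      have yK: "y \<in> K" unfolding K_def by blast
      show "\<exists>xs. W xs \<and> hd xs = k \<and> last xs = y \<and> set xs \<subseteq> K"
      proof (cases "k = y")
        case True then show ?thesis using y yK by (intro exI[of _ "[y]"]) auto
      next
        case ny: False
        have "k = x \<or> k \<in> P5 \<or> k \<in> q ` P5 \<or> k \<in> s ` P5 \<or> k \<in> Z3 \<or> k \<in> wz ` Z3 \<or> k \<in> uz ` Z3"
          using k ny unfolding K_def by blast
        then show ?thesis
        proof (elim disjE imageE)
          assume "k = x" then show ?thesis using Z3V[OF x] y yK x unfolding K_def
            by (intro exI[of _ "[x,y]"]) (auto simp del: wlk.simps(3) simp add: wlk2)
        next
          assume kp: "k \<in> P5" then show ?thesis using P5V[OF kp] y unfolding K_def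
            by (intro exI[of _ "[k,y]"]) (auto simp del: wlk.simps(3) simp add: wlk2)
        next
          fix p assume kp: "k = q p" "p \<in> P5" then show ?thesis using P5V[OF kp(2)] epq[OF kp(2)] y
            unfolding K_def by (intro exI[of _ "[q p, p, y]"]) (auto simp del: wlk.simps(3) simp add: wlk2)
        next
          fix p assume kp: "k = s p" "p \<in> P5" then show ?thesis
            using P5V[OF kp(2)] epq[OF kp(2)] eqs[OF kp(2)] y
            unfolding K_def by (intro exI[of _ "[s p, q p, p, y]"]) (auto simp del: wlk.simps(3) simp add: wlk2)
        next
          assume kz: "k \<in> Z3" then show ?thesis using Z3V[OF kz] y unfolding K_def
            by (intro exI[of _ "[k,y]"]) (auto simp del: wlk.simps(3) simp add: wlk2)
        next
          fix z assume kz: "k = wz z" "z \<in> Z3" then show ?thesis using Z3V[OF kz(2)] ezw[OF kz(2)] y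
            unfolding K_def by (intro exI[of _ "[wz z, z, y]"]) (auto simp del: wlk.simps(3) simp add: wlk2)
        next
          fix z assume kz: "k = uz z" "z \<in> Z3" then show ?thesis
            using Z3V[OF kz(2)] ezw[OF kz(2)] ewu[OF kz(2)] y
            unfolding K_def by (intro exI[of _ "[uz z, wz z, z, y]"]) (auto simp del: wlk.simps(3) simp add: wlk2)
        qed
      qed
    qed
    show "\<forall>k\<in>K. \<exists>c\<in>C. {k,c} \<in> E"
    proof
      fix k assume k: "k \<in> K"
      then have "k = y \<or> k = x \<or> k \<in> P5 \<or> k \<in> q ` P5 \<or> k \<in> s ` P5 \<or> k \<in> Z3 \<or> k \<in> wz ` Z3 \<or> k \<in> uz ` Z3"
        unfolding K_def by blast
      then show "\<exists>c\<in>C. {k,c} \<in> E"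
      proof (elim disjE imageE)
        assume "k = y" then show ?thesis using xC Z3V[OF x] by blast
      next
        assume "k = x" then show ?thesis using yC Z3V[OF x] by blast
      next
        assume kp: "k \<in> P5" then show ?thesis using qC[OF kp] epq[OF kp] by blast
      next
        fix p assume "k = q p" "p \<in> P5" then show ?thesis using pC epq by blast
      next
        fix p assume "k = s p" "p \<in> P5" then show ?thesis using qC eqs by blast
      next
        assume kz: "k \<in> Z3" then show ?thesis using yC Z3V[OF kz] by blast
      next
        fix z assume "k = wz z" "z \<in> Z3" then show ?thesis using zC ezw by blast
      next
        fix z assume "k = uz z" "z \<in> Z3" then show ?thesis using lzC eul by blast
      qed
    qed
    show "\<forall>v\<in>V - K. is_leaf V E v \<longrightarrow> (\<forall>n. {v,n} \<in> E \<longrightarrow> n \<in> C)"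
    proof (intro ballI impI allI)
      fix v n assume v: "v \<in> V - K" "is_leaf V E v" and e: "{v,n} \<in> E"
      have hn: "h n = 1" using leaf_adj_h[OF h_leaf[OF v(2)] e] .
      have c1: "n \<notin> nb x" using nb_h hn Z3V[OF x] by fastforce
      have c2: "\<forall>p\<in>P5. n \<notin> nb (s p)"
      proof (intro ballI notI)
        fix p assume p: "p \<in> P5" and "n \<in> nb (s p)"
        then show False using nb_h[of n "s p"] hn hs[OF p] by auto
      qed
      have c3: "\<forall>z\<in>Z3. n \<notin> nb (uz z)" using nb_h huz hn by fastforce
      show "n \<in> C" using Cmem c1 c2 c3 e edge by blast
    qed
  qed
  show ?thesis
  proof (rule swap_not_unmixed[OF td, of "{y} \<union> q ` P5 \<union> lz ` Z3" "{y} \<union> lz ` Z3" "wz ` Z3"])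
    show "{y} \<union> q ` P5 \<union> lz ` Z3 \<subseteq> C" using yC qC lzC by blast
    show "\<forall>f\<in>{y} \<union> q ` P5 \<union> lz ` Z3. \<exists>p\<in>V. nb p \<inter> C = {f}"
    proof
      fix f assume "f \<in> {y} \<union> q ` P5 \<union> lz ` Z3"
      then consider "f = y" | p where "p \<in> P5" "f = q p" | z where "z \<in> Z3" "f = lz z" by blast
      then show "\<exists>p\<in>V. nb p \<inter> C = {f}"
      proof cases
        case 1
        have "(x,y) \<in> P" unfolding P_def by blast
        then show ?thesis using forced_pair[OF C_def, of x y] yC Z3V[OF x] 1 by blast
      next
        case (2 p)
        have "(s p, q p) \<in> P" unfolding P_def using 2 by blast
        then show ?thesis using forced_pair[OF C_def, of "s p" "q p"] qC[OF 2(1)] eqs[OF 2(1)] Vs[OF 2(1)] 2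
          by blast
      next
        case (3 z)
        have "(uz z, lz z) \<in> P" unfolding P_def using 3 by blast
        then show ?thesis using forced_pair[OF C_def, of "uz z" "lz z"] lzC[OF 3(1)] eul[OF 3(1)] Vuz[OF 3(1)] 3
          by blast
      qed
    qed
    show "{y} \<union> lz ` Z3 \<subseteq> {y} \<union> q ` P5 \<union> lz ` Z3" by blast
    show "wz ` Z3 \<subseteq> V" using Vwz by blast
    have inj: "inj_on lz Z3"
    proof
      fix z z' assume z: "z \<in> Z3" and z': "z' \<in> Z3" and eq: "lz z = lz z'"
      have "lz z \<in> nb (uz z')" using eq eul[OF z'] e_nb by metis
      then show "z = z'" using lz_uz z z' by blast
    qed
    have "y \<notin> lz ` Z3" using hlz y(2) by fastforce
    then have "card ({y} \<union> lz ` Z3) = Suc (card (lz ` Z3))" using finZ by simp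
    also have "card (lz ` Z3) = card Z3" using card_image[OF inj] .
    finally have c1: "card ({y} \<union> lz ` Z3) = Suc (card Z3)" .
    have "card (wz ` Z3) \<le> card Z3" using card_image_le[OF finZ] .
    then show "card (wz ` Z3) < card ({y} \<union> lz ` Z3)" using c1 by simp
    show "\<forall>v\<in>V. \<forall>r\<in>{y} \<union> lz ` Z3. {v,r} \<in> E \<longrightarrow>
        (\<exists>a\<in>wz ` Z3 \<union> (({y} \<union> q ` P5 \<union> lz ` Z3) - ({y} \<union> lz ` Z3)). {v,a} \<in> E)"
    proof (intro ballI impI)
      fix v r assume v: "v \<in> V" and r: "r \<in> {y} \<union> lz ` Z3" and e: "{v,r} \<in> E"
      show "\<exists>a\<in>wz ` Z3 \<union> (({y} \<union> q ` P5 \<union> lz ` Z3) - ({y} \<union> lz ` Z3)). {v,a} \<in> E"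
      proof (cases "r = y")
        case True
        then have "v \<in> nb y" using e nb_iff by blast
        then have "v \<in> Z3 \<or> v \<in> P5" using nby by blast
        then show ?thesis
        proof
          assume vz: "v \<in> Z3" then show ?thesis using ezw[OF vz] by blast
        next
          assume vp: "v \<in> P5"
          have "q v \<noteq> y" using q vp by blast
          moreover have "q v \<notin> lz ` Z3" using hq[OF vp] hlz by fastforce
          ultimately show ?thesis using epq[OF vp] vp by blast
        qed
      next
        case False
        then obtain z where z: "z \<in> Z3" "r = lz z" using r by blast
        then have "v = uz z" using leaf_unique[of "lz z" v "uz z"] lz e eul[OF z(1)] edge_sym by blast
        then show ?thesis using ewu[OF z(1)] z by blast
      qed
    qed
  qed
qed

end



context btree begin

lemma not_cond3:
  assumes hall: "\<forall>v\<in>V. h v \<le> 3"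
  and uniq: "\<And>w a b. w \<in> V \<Longrightarrow> h w = 2 \<Longrightarrow> a \<in> nb w \<Longrightarrow> b \<in> nb w \<Longrightarrow> h a = 1 \<Longrightarrow> h b = 1 \<Longrightarrow> a = b"
  and u: "u \<in> V" "h u = 1" and w1: "w1 \<in> nb u" "h w1 = 2" and w2: "w2 \<in> nb u" "h w2 = 2"
  and w12: "w1 \<noteq> w2"
  shows "\<not> unmixed V E"
proof -
  have w1V: "w1 \<in> V" and w2V: "w2 \<in> V" using w1 w2 nb_V by blast+
  have ew1: "{u,w1} \<in> E \<and> {w1,u} \<in> E" and ew2: "{u,w2} \<in> E \<and> {w2,u} \<in> E" using w1 w2 nb_e by blast+
  define Z where "Z = {z \<in> nb w1. h z = 3}"
  have finZ: "finite Z" unfolding Z_def using fin_nb by simp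
  have ZV: "\<And>z. z \<in> Z \<Longrightarrow> z \<in> V \<and> h z = 3 \<and> {w1,z} \<in> E \<and> {z,w1} \<in> E"
    unfolding Z_def using nb_e nb_V by blast
  have nbw1: "\<And>v. v \<in> nb w1 \<Longrightarrow> v = u \<or> v \<in> Z"
  proof -
    fix v assume v: "v \<in> nb w1"
    have "h v = 1 \<or> h v = 3" using nb_h[OF v] w1(2) by auto
    then show "v = u \<or> v \<in> Z"
    proof
      assume "h v = 1"
      then have "v = u" using uniq[OF w1V w1(2) v, of u] u w1 nb_sym by blast
      then show ?thesis by blast
    qed (use v Z_def in blast)
  qed
  have up3: "\<And>w v. w \<in> V \<Longrightarrow> h w = 2 \<Longrightarrow> v \<in> nb w \<Longrightarrow> v \<noteq> u' \<Longrightarrow> u' \<in> nb w \<Longrightarrow> h u' = 1 \<Longrightarrow> h v = 3" for u'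
  proof -
    fix w v assume a: "w \<in> V" "h w = 2" "v \<in> nb w" "v \<noteq> u'" "u' \<in> nb w" "h u' = 1"
    have "h v = 1 \<or> h v = 3" using nb_h[OF a(3)] a(2) by auto
    then show "h v = 3" using uniq[OF a(1,2,3,5)] a by blast
  qed
  obtain x1 where x1: "x1 \<in> Z"
  proof -
    have "u \<in> nb w1" using w1 nb_sym by blast
    then obtain b where "b \<in> nb w1" "b \<noteq> u" using other_nb[of w1 u] w1V w1(2) by auto
    then show ?thesis using that nbw1 by blast
  qed
  obtain x2 where x2: "x2 \<in> nb w2" "h x2 = 3"
  proof -
    have uw: "u \<in> nb w2" using w2 nb_sym by blast
    then obtain b where "b \<in> nb w2" "b \<noteq> u" using other_nb[of w2 u] w2V w2(2) by auto
    then show ?thesis using that up3[OF w2V w2(2)] uw u by blast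
  qed
  have x2V: "x2 \<in> V" and ex2: "{w2,x2} \<in> E \<and> {x2,w2} \<in> E" using x2 nb_V nb_e by blast+
  have "\<forall>z\<in>Z. \<exists>w. w \<in> nb z \<and> w \<noteq> w1"
  proof
    fix z assume z: "z \<in> Z"
    have "w1 \<in> nb z" using ZV[OF z] e_nb by blast
    then show "\<exists>w. w \<in> nb z \<and> w \<noteq> w1" using other_nb[of z w1] ZV[OF z] by auto
  qed
  then obtain wz where wz0: "\<forall>z\<in>Z. wz z \<in> nb z \<and> wz z \<noteq> w1" by metis
  have hwz: "\<And>z. z \<in> Z \<Longrightarrow> h (wz z) = 2"
  proof -
    fix z assume z: "z \<in> Z"
    have "h (wz z) = 2 \<or> h (wz z) = 4" using nb_h[of "wz z" z] wz0 z ZV[OF z] by auto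
    moreover have "h (wz z) \<le> 3" using hall wz0 z nb_V by blast
    ultimately show "h (wz z) = 2" by auto
  qed
  have "\<forall>z\<in>Z. \<exists>u. u \<in> nb (wz z) \<and> h u = 1" using h_down_nb[of _ 1] wz0 hwz nb_V by fastforce
  then obtain uz where uz: "\<forall>z\<in>Z. uz z \<in> nb (wz z) \<and> h (uz z) = 1" by metis
  have "\<forall>z\<in>Z. \<exists>l. {uz z,l} \<in> E \<and> h l = 0 \<and> is_leaf V E l" using leaf_below uz nb_V by blast
  then obtain lz where lz: "\<forall>z\<in>Z. {uz z, lz z} \<in> E \<and> h (lz z) = 0 \<and> is_leaf V E (lz z)" by metis
  have ezw: "\<And>z. z \<in> Z \<Longrightarrow> {z, wz z} \<in> E \<and> {wz z, z} \<in> E" using wz0 nb_e by blast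
  have ewu: "\<And>z. z \<in> Z \<Longrightarrow> {wz z, uz z} \<in> E \<and> {uz z, wz z} \<in> E" using uz nb_e by blast
  have eul: "\<And>z. z \<in> Z \<Longrightarrow> {uz z, lz z} \<in> E \<and> {lz z, uz z} \<in> E" using lz edge_sym by blast
  have wzn: "\<And>z. z \<in> Z \<Longrightarrow> wz z \<noteq> w1" using wz0 by blast
  have huz: "\<And>z. z \<in> Z \<Longrightarrow> h (uz z) = 1" using uz by blast
  have hlz: "\<And>z. z \<in> Z \<Longrightarrow> h (lz z) = 0" using lz by blast
  have Vwz: "\<And>z. z \<in> Z \<Longrightarrow> wz z \<in> V" using ezw edge by blast
  have Vuz: "\<And>z. z \<in> Z \<Longrightarrow> uz z \<in> V" using ewu edge by blast
  have Vlz: "\<And>z. z \<in> Z \<Longrightarrow> lz z \<in> V" using eul edge by blast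
  have uz_ne: "\<And>z. z \<in> Z \<Longrightarrow> uz z \<noteq> u"
  proof
    fix z assume z: "z \<in> Z" and eq: "uz z = u"
    have w: "W [z, wz z, u]" using ezw[OF z] ewu[OF z] eq u by (simp del: wlk.simps(3) add: wlk2)
    have "w1 \<notin> set [z, wz z, u]" using wzn[OF z] ZV[OF z] w1(2) u(2) by auto
    moreover have "z \<noteq> u" using ZV[OF z] u by auto
    ultimately show False using no_detour[of w1 z u "[z, wz z, u]"] ZV[OF z] ew1 w by simp
  qed
  have uz_inj: "\<And>z z'. z \<in> Z \<Longrightarrow> z' \<in> Z \<Longrightarrow> uz z = uz z' \<Longrightarrow> z = z'"
  proof (rule ccontr)
    fix z z' assume z: "z \<in> Z" and z': "z' \<in> Z" and eq: "uz z = uz z'" and ne: "z \<noteq> z'"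
    have w: "W [z, wz z, uz z, wz z', z']"
      using ezw[OF z] ewu[OF z] ewu[OF z'] ezw[OF z'] ZV[OF z'] eq by (simp del: wlk.simps(3) add: wlk2)
    have "w1 \<notin> set [z, wz z, uz z, wz z', z']"
      using w1(2) ZV[OF z] ZV[OF z'] wzn[OF z] wzn[OF z'] huz[OF z] by auto
    then show False using no_detour[of w1 z z' "[z, wz z, uz z, wz z', z']"] ZV[OF z] ZV[OF z'] ne w by simp
  qed
  have lz_uz: "\<And>z z'. z \<in> Z \<Longrightarrow> z' \<in> Z \<Longrightarrow> lz z \<in> nb (uz z') \<Longrightarrow> z = z'"
  proof -
    fix z z' assume z: "z \<in> Z" and z': "z' \<in> Z" and l: "lz z \<in> nb (uz z')"
    have "{lz z, uz z'} \<in> E" using l nb_iff by blast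
    then have "uz z' = uz z" using leaf_unique[of "lz z" "uz z'" "uz z"] lz z eul[OF z] by blast
    then show "z = z'" using uz_inj[OF z' z] by simp
  qed
  have x1Z: "{w1,x1} \<in> E \<and> {x1,w1} \<in> E" using ZV[OF x1] by blast
  define P where "P = {(x1,w1),(x2,w2)} \<union> (\<lambda>z. (uz z, lz z)) ` Z"
  define C where "C = V - (\<Union>(a,b)\<in>P. nb a - {b})"
  have Cmem: "\<And>c. c \<in> C \<longleftrightarrow> c \<in> V \<and> (c \<in> nb x1 \<longrightarrow> c = w1) \<and> (c \<in> nb x2 \<longrightarrow> c = w2)
      \<and> (\<forall>z\<in>Z. c \<in> nb (uz z) \<longrightarrow> c = lz z)"
    unfolding C_def P_def by blast
  have w1C: "w1 \<in> C"
  proof -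
    have c2: "w1 \<in> nb x2 \<longrightarrow> w1 = w2"
    proof
      assume a: "w1 \<in> nb x2"
      show "w1 = w2"
      proof (rule ccontr)
        assume ne: "w1 \<noteq> w2"
        have w: "W [w1, x2, w2]" using nb_e[OF a] ex2 w2V by (simp del: wlk.simps(3) add: wlk2)
        have "u \<notin> set [w1, x2, w2]" using u(2) w1(2) w2(2) x2(2) by auto
        then show False using no_detour[of u w1 w2 "[w1, x2, w2]"] ew1 ew2 ne w by simp
      qed
    qed
    have c3: "\<forall>z\<in>Z. w1 \<notin> nb (uz z)"
    proof (intro ballI notI)
      fix z assume z: "z \<in> Z" and a: "w1 \<in> nb (uz z)"
      then have "uz z \<in> nb w1" using nb_sym by blast
      then have "uz z = u" using nbw1 huz[OF z] ZV by fastforce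
      then show False using uz_ne[OF z] by simp
    qed
    show ?thesis using Cmem c2 c3 w1V by blast
  qed
  have w2C: "w2 \<in> C"
  proof -
    have c1: "w2 \<in> nb x1 \<longrightarrow> w2 = w1"
    proof
      assume a: "w2 \<in> nb x1"
      show "w2 = w1"
      proof (rule ccontr)
        assume ne: "w2 \<noteq> w1"
        have w: "W [w1, x1, w2]" using nb_e[OF a] x1Z w2V by (simp del: wlk.simps(3) add: wlk2)
        have "u \<notin> set [w1, x1, w2]" using u(2) w1(2) w2(2) ZV[OF x1] by auto
        then show False using no_detour[of u w1 w2 "[w1, x1, w2]"] ew1 ew2 w12 w by simp
      qed
    qed
    have c3: "\<forall>z\<in>Z. w2 \<notin> nb (uz z)"
    proof (intro ballI notI)
      fix z assume z: "z \<in> Z" and a: "w2 \<in> nb (uz z)"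
      then have "uz z \<in> nb w2" using nb_sym by blast
      then have "uz z = u" using uniq[OF w2V w2(2), of "uz z" u] huz[OF z] u w2 nb_sym by blast
      then show False using uz_ne[OF z] by simp
    qed
    show ?thesis using Cmem c1 c3 w2V by blast
  qed
  have lzC: "\<And>z. z \<in> Z \<Longrightarrow> lz z \<in> C"
  proof -
    fix z assume z: "z \<in> Z"
    have c1: "lz z \<notin> nb x1" using nb_h hlz[OF z] ZV[OF x1] by fastforce
    have c2: "lz z \<notin> nb x2" using nb_h hlz[OF z] x2 by fastforce
    have c3: "\<forall>z'\<in>Z. lz z \<in> nb (uz z') \<longrightarrow> lz z = lz z'" using lz_uz z by blast
    show "lz z \<in> C" using Cmem c1 c2 c3 Vlz[OF z] by blast
  qed
  have uC: "u \<in> C"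
  proof -
    have c1: "u \<notin> nb x1" using nb_h u ZV[OF x1] by fastforce
    have c2: "u \<notin> nb x2" using nb_h u x2 by fastforce
    have c3: "\<forall>z\<in>Z. u \<notin> nb (uz z)" using nb_h huz u by fastforce
    show ?thesis using Cmem c1 c2 c3 u by blast
  qed
  have uzC: "\<And>z. z \<in> Z \<Longrightarrow> uz z \<in> C"
  proof -
    fix z assume z: "z \<in> Z"
    have c1: "uz z \<notin> nb x1" using nb_h huz[OF z] ZV[OF x1] by fastforce
    have c2: "uz z \<notin> nb x2" using nb_h huz[OF z] x2 by fastforce
    have c3: "\<forall>z'\<in>Z. uz z \<notin> nb (uz z')" using nb_h huz z by fastforce
    show "uz z \<in> C" using Cmem c1 c2 c3 Vuz[OF z] by blast
  qed
  define K where "K = {w1, u, w2, x2} \<union> Z \<union> wz ` Z \<union> uz ` Z"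
  have td: "td_set V E C"
  proof (rule hub_td[OF C_def, of K w1])
    show "K \<subseteq> V" unfolding K_def using w1V u w2V x2V ZV Vwz Vuz by blast
    show "\<forall>(a,b)\<in>P. a \<in> K" unfolding P_def K_def using x1 by blast
    show "\<forall>k\<in>K. \<exists>xs. W xs \<and> hd xs = k \<and> last xs = w1 \<and> set xs \<subseteq> K"
    proof
      fix k assume k: "k \<in> K"
      then have "k = w1 \<or> k = u \<or> k = w2 \<or> k = x2 \<or> k \<in> Z \<or> k \<in> wz ` Z \<or> k \<in> uz ` Z"
        unfolding K_def by blast
      then show "\<exists>xs. W xs \<and> hd xs = k \<and> last xs = w1 \<and> set xs \<subseteq> K"
      proof (elim disjE imageE)
        assume "k = w1" then show ?thesis using w1V unfolding K_def
          by (intro exI[of _ "[w1]"]) auto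
      next
        assume "k = u" then show ?thesis using w1V ew1 unfolding K_def
          by (intro exI[of _ "[u,w1]"]) (auto simp del: wlk.simps(3) simp add: wlk2)
      next
        assume "k = w2" then show ?thesis using w1V ew1 ew2 unfolding K_def
          by (intro exI[of _ "[w2,u,w1]"]) (auto simp del: wlk.simps(3) simp add: wlk2)
      next
        assume "k = x2" then show ?thesis using w1V ew1 ew2 ex2 unfolding K_def
          by (intro exI[of _ "[x2,w2,u,w1]"]) (auto simp del: wlk.simps(3) simp add: wlk2)
      next
        assume kz: "k \<in> Z" then show ?thesis using ZV[OF kz] w1V unfolding K_def
          by (intro exI[of _ "[k,w1]"]) (auto simp del: wlk.simps(3) simp add: wlk2)
      next
        fix z assume kz: "k = wz z" "z \<in> Z" then show ?thesis using ZV[OF kz(2)] ezw[OF kz(2)] w1V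
          unfolding K_def by (intro exI[of _ "[wz z, z, w1]"]) (auto simp del: wlk.simps(3) simp add: wlk2)
      next
        fix z assume kz: "k = uz z" "z \<in> Z" then show ?thesis
          using ZV[OF kz(2)] ezw[OF kz(2)] ewu[OF kz(2)] w1V
          unfolding K_def by (intro exI[of _ "[uz z, wz z, z, w1]"]) (auto simp del: wlk.simps(3) simp add: wlk2)
      qed
    qed
    show "\<forall>k\<in>K. \<exists>c\<in>C. {k,c} \<in> E"
    proof
      fix k assume k: "k \<in> K"
      then have "k = w1 \<or> k = u \<or> k = w2 \<or> k = x2 \<or> k \<in> Z \<or> k \<in> wz ` Z \<or> k \<in> uz ` Z"
        unfolding K_def by blast
      then show "\<exists>c\<in>C. {k,c} \<in> E"
      proof (elim disjE imageE)
        assume "k = w1" then show ?thesis using uC ew1 by blast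
      next
        assume "k = u" then show ?thesis using w1C ew1 by blast
      next
        assume "k = w2" then show ?thesis using uC ew2 by blast
      next
        assume "k = x2" then show ?thesis using w2C ex2 by blast
      next
        assume kz: "k \<in> Z" then show ?thesis using w1C ZV[OF kz] by blast
      next
        fix z assume "k = wz z" "z \<in> Z" then show ?thesis using uzC ewu by blast
      next
        fix z assume "k = uz z" "z \<in> Z" then show ?thesis using lzC eul by blast
      qed
    qed
    show "\<forall>v\<in>V - K. is_leaf V E v \<longrightarrow> (\<forall>n. {v,n} \<in> E \<longrightarrow> n \<in> C)"
    proof (intro ballI impI allI)
      fix v n assume v: "v \<in> V - K" "is_leaf V E v" and e: "{v,n} \<in> E"
      have hn: "h n = 1" using leaf_adj_h[OF h_leaf[OF v(2)] e] .
      have c1: "n \<notin> nb x1" using nb_h hn ZV[OF x1] by fastforce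
      have c2: "n \<notin> nb x2" using nb_h hn x2 by fastforce
      have c3: "\<forall>z\<in>Z. n \<notin> nb (uz z)" using nb_h huz hn by fastforce
      show "n \<in> C" using Cmem c1 c2 c3 e edge by blast
    qed
  qed
  show ?thesis
  proof (rule swap_not_unmixed[OF td, of "{w1, w2} \<union> lz ` Z" "{w1} \<union> lz ` Z" "wz ` Z"])
    show "{w1, w2} \<union> lz ` Z \<subseteq> C" using w1C w2C lzC by blast
    show "\<forall>f\<in>{w1, w2} \<union> lz ` Z. \<exists>p\<in>V. nb p \<inter> C = {f}"
    proof
      fix f assume "f \<in> {w1, w2} \<union> lz ` Z"
      then consider "f = w1" | "f = w2" | z where "z \<in> Z" "f = lz z" by blast
      then show "\<exists>p\<in>V. nb p \<inter> C = {f}"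
      proof cases
        case 1
        have "(x1,w1) \<in> P" unfolding P_def by blast
        then show ?thesis using forced_pair[OF C_def, of x1 w1] w1C x1Z ZV[OF x1] 1 by blast
      next
        case 2
        have "(x2,w2) \<in> P" unfolding P_def by blast
        then show ?thesis using forced_pair[OF C_def, of x2 w2] w2C ex2 x2V 2 by blast
      next
        case (3 z)
        have "(uz z, lz z) \<in> P" unfolding P_def using 3 by blast
        then show ?thesis using forced_pair[OF C_def, of "uz z" "lz z"] lzC[OF 3(1)] eul[OF 3(1)] Vuz[OF 3(1)] 3
          by blast
      qed
    qed
    show "{w1} \<union> lz ` Z \<subseteq> {w1, w2} \<union> lz ` Z" by blast
    show "wz ` Z \<subseteq> V" using Vwz by blast
    have inj: "inj_on lz Z"
    proof
      fix z z' assume z: "z \<in> Z" and z': "z' \<in> Z" and eq: "lz z = lz z'"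
      have "lz z \<in> nb (uz z')" using eq eul[OF z'] e_nb by metis
      then show "z = z'" using lz_uz z z' by blast
    qed
    have "w1 \<notin> lz ` Z" using hlz w1(2) by fastforce
    then have "card ({w1} \<union> lz ` Z) = Suc (card (lz ` Z))" using finZ by simp
    also have "card (lz ` Z) = card Z" using card_image[OF inj] .
    finally have c1: "card ({w1} \<union> lz ` Z) = Suc (card Z)" .
    have "card (wz ` Z) \<le> card Z" using card_image_le[OF finZ] .
    then show "card (wz ` Z) < card ({w1} \<union> lz ` Z)" using c1 by simp
    show "\<forall>v\<in>V. \<forall>r\<in>{w1} \<union> lz ` Z. {v,r} \<in> E \<longrightarrow>
        (\<exists>a\<in>wz ` Z \<union> (({w1, w2} \<union> lz ` Z) - ({w1} \<union> lz ` Z)). {v,a} \<in> E)"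
    proof (intro ballI impI)
      fix v r assume v: "v \<in> V" and r: "r \<in> {w1} \<union> lz ` Z" and e: "{v,r} \<in> E"
      show "\<exists>a\<in>wz ` Z \<union> (({w1, w2} \<union> lz ` Z) - ({w1} \<union> lz ` Z)). {v,a} \<in> E"
      proof (cases "r = w1")
        case True
        then have "v \<in> nb w1" using e nb_iff by blast
        then have "v = u \<or> v \<in> Z" using nbw1 by blast
        then show ?thesis
        proof
          assume vz: "v \<in> Z" then show ?thesis using ezw[OF vz] by blast
        next
          assume vu: "v = u"
          have "w2 \<notin> lz ` Z" using hlz w2(2) by fastforce
          then show ?thesis using ew2 vu w12 by blast
        qed
      next
        case False
        then obtain z where z: "z \<in> Z" "r = lz z" using r by blast
        then have "v = uz z" using leaf_unique[of "lz z" v "uz z"] lz e eul[OF z(1)] edge_sym by blast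
        then show ?thesis using ewu[OF z(1)] z by blast
      qed
    qed
  qed
qed

end



context btree begin

lemma private_nb:
  assumes Dm: "minimal_td_set V E D" and d: "dd \<in> D"
  shows "\<exists>v\<in>V. {v,dd} \<in> E \<and> (\<forall>x\<in>D. {v,x} \<in> E \<longrightarrow> x = dd)"
proof (rule ccontr)
  assume na: "\<not> ?thesis"
  have H: "\<forall>v\<in>V. {v,dd} \<in> E \<longrightarrow> (\<exists>x\<in>D. {v,x} \<in> E \<and> x \<noteq> dd)" using na by auto
  have Dt: "td_set V E D" using Dm unfolding minimal_td_set_def by blast
  have "td_set V E (D - {dd})"
    unfolding td_iff
  proof (intro conjI ballI)
    show "D - {dd} \<subseteq> V" using td_sub[OF Dt] by blast
    fix v assume v: "v \<in> V"
    obtain x where x: "x \<in> D" "{v,x} \<in> E" using td_dom[OF Dt v] by blast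
    show "\<exists>x\<in>D - {dd}. {v,x} \<in> E"
    proof (cases "x = dd")
      case False then show ?thesis using x by blast
    next
      case True
      then obtain y where "y \<in> D" "{v,y} \<in> E" "y \<noteq> dd" using H v x by auto
      then show ?thesis by blast
    qed
  qed
  moreover have "D - {dd} \<subset> D" using d by blast
  ultimately show False using Dm unfolding minimal_td_set_def by blast
qed

lemma min_card:
  assumes hall: "\<forall>v\<in>V. h v \<le> 3"
  and c2: "\<forall>w\<in>V. h w = 2 \<longrightarrow> card (nb w \<inter> {v\<in>V. h v = 1}) = 1"
  and c3: "\<forall>u\<in>V. h u = 1 \<longrightarrow> card (nb u \<inter> {v\<in>V. h v = 2}) \<le> 1"
  and Dm: "minimal_td_set V E D"
  shows "card D = 2 * card {v\<in>V. h v = 1}"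
proof -
  define V1 where "V1 = {v\<in>V. h v = 1}"
  have Dt: "td_set V E D" using Dm unfolding minimal_td_set_def by blast
  have DV: "D \<subseteq> V" using td_sub[OF Dt] .
  have finD: "finite D" using td_fin[OF Dt] .
  have V1D: "V1 \<subseteq> D"
  proof
    fix u assume "u \<in> V1"
    then have u: "u \<in> V" "h u = 1" unfolding V1_def by auto
    obtain l where l: "{u,l} \<in> E" "is_leaf V E l" using leaf_below[OF u] by blast
    obtain x where x: "x \<in> D" "{l,x} \<in> E" using td_dom[OF Dt leaf_V[OF l(2)]] by blast
    have "x = u" using leaf_unique[OF l(2) x(2)] l(1) edge_sym by blast
    then show "u \<in> D" using x by simp
  qed
  have no3: "\<And>x. x \<in> D \<Longrightarrow> h x \<noteq> 3"
  proof
    fix x assume x: "x \<in> D" and hx: "h x = 3"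
    obtain v where v: "v \<in> V" "{v,x} \<in> E" and pv: "\<forall>y\<in>D. {v,y} \<in> E \<longrightarrow> y = x"
      using private_nb[OF Dm x] by blast
    have "h v = 2 \<or> h v = 4" using h_adj[OF v(2)] hx by auto
    moreover have "h v \<le> 3" using hall v by blast
    ultimately have hv: "h v = 2" by auto
    obtain u where u: "{v,u} \<in> E" "h u = 1" using h_down[of v 1] v hv by auto
    have "u \<in> D" using V1D u edge unfolding V1_def by blast
    then have "u = x" using pv u by blast
    then show False using u hx by simp
  qed
  define S where "S = {s\<in>D. h s = 0 \<or> h s = 2}"
  have Dsplit: "D = V1 \<union> S"
  proof
    show "D \<subseteq> V1 \<union> S"
    proof
      fix x assume x: "x \<in> D"
      have "h x \<le> 3" using hall DV x by blast
      then have "h x = 0 \<or> h x = 1 \<or> h x = 2" using no3[OF x] by auto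
      then show "x \<in> V1 \<union> S" using x DV unfolding V1_def S_def by auto
    qed
    show "V1 \<union> S \<subseteq> D" using V1D unfolding S_def by blast
  qed
  have disj: "V1 \<inter> S = {}" unfolding V1_def S_def by auto
  have finS: "finite S" using finD unfolding S_def by simp
  have finV1: "finite V1" unfolding V1_def using finV by simp
  have ex1: "\<And>s. s \<in> S \<Longrightarrow> \<exists>!u. {s,u} \<in> E \<and> h u = 1"
  proof -
    fix s assume s: "s \<in> S"
    then have sV: "s \<in> V" using DV unfolding S_def by blast
    have "h s = 0 \<or> h s = 2" using s unfolding S_def by blast
    then show "\<exists>!u. {s,u} \<in> E \<and> h u = 1"
    proof
      assume h0: "h s = 0"
      then have lf: "is_leaf V E s" using h0_leaf sV by blast
      obtain u where "u \<in> nb s" using nb_ne[OF sV] by blast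
      then have u: "{s,u} \<in> E" using nb_iff edge_sym by blast
      then have "h u = 1" using leaf_adj_h h0 by blast
      then show ?thesis using u leaf_unique[OF lf] by blast
    next
      assume h2: "h s = 2"
      obtain u where u: "{s,u} \<in> E" "h u = 1" using h_down[of s 1] sV h2 by auto
      have c: "card (nb s \<inter> V1) = 1" using c2 sV h2 unfolding V1_def by blast
      have "\<And>u'. {s,u'} \<in> E \<Longrightarrow> h u' = 1 \<Longrightarrow> u' = u"
      proof -
        fix u' assume u': "{s,u'} \<in> E" "h u' = 1"
        have "u' \<in> nb s \<inter> V1" "u \<in> nb s \<inter> V1"
          using u u' nb_iff edge_sym edge unfolding V1_def by blast+
        obtain a where "nb s \<inter> V1 = {a}" using c card_1_singletonE by blast
        then show "u' = u" using \<open>u' \<in> nb s \<inter> V1\<close> \<open>u \<in> nb s \<inter> V1\<close> by auto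
      qed
      then show ?thesis using u by blast
    qed
  qed
  define g where "g s = (THE u. {s,u} \<in> E \<and> h u = 1)" for s
  have g: "\<And>s. s \<in> S \<Longrightarrow> {s, g s} \<in> E \<and> h (g s) = 1"
    unfolding g_def using ex1 by (rule theI')
  have gu: "\<And>s u. s \<in> S \<Longrightarrow> {s,u} \<in> E \<Longrightarrow> h u = 1 \<Longrightarrow> g s = u"
    using g ex1 by blast
  have "bij_betw g S V1"
    unfolding bij_betw_def
  proof (intro conjI)
    show "inj_on g S"
    proof
      fix s s' assume s: "s \<in> S" and s': "s' \<in> S" and eq: "g s = g s'"
      show "s = s'"
      proof (rule ccontr)
        assume ne: "s \<noteq> s'"
        let ?u = "g s"
        have e1: "{s,?u} \<in> E" and hu: "h ?u = 1" using g[OF s] by auto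
        have e2: "{s',?u} \<in> E" using g[OF s'] eq by auto
        have sD: "s \<in> D" and s'D: "s' \<in> D" using s s' unfolding S_def by auto
        have sV: "s \<in> V" and s'V: "s' \<in> V" using sD s'D DV by auto
        have leafcase: "\<And>a b. a \<in> S \<Longrightarrow> b \<in> D \<Longrightarrow> a \<noteq> b \<Longrightarrow> h a = 0 \<Longrightarrow> {a,?u} \<in> E \<Longrightarrow> {b,?u} \<in> E \<Longrightarrow> False"
        proof -
          fix a b assume a: "a \<in> S" and b: "b \<in> D" and ab: "a \<noteq> b" and ha: "h a = 0"
            and ea: "{a,?u} \<in> E" and eb: "{b,?u} \<in> E"
          have aD: "a \<in> D" and aV: "a \<in> V" using a DV unfolding S_def by auto
          have lf: "is_leaf V E a" using h0_leaf aV ha by blast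
          obtain v where v: "v \<in> V" "{v,a} \<in> E" and pv: "\<forall>x\<in>D. {v,x} \<in> E \<longrightarrow> x = a"
            using private_nb[OF Dm aD] by blast
          have "v = ?u" using leaf_unique[OF lf] v(2) ea edge_sym by blast
          then have "b = a" using pv b eb edge_sym by blast
          then show False using ab by simp
        qed
        have "h s = 0 \<or> h s = 2" "h s' = 0 \<or> h s' = 2" using s s' unfolding S_def by auto
        moreover have "h s = 0 \<Longrightarrow> False" using leafcase[OF s s'D ne] e1 e2 by blast
        moreover have "h s' = 0 \<Longrightarrow> False" using leafcase[OF s' sD ne[symmetric]] e1 e2 by blast
        moreover have "h s = 2 \<Longrightarrow> h s' = 2 \<Longrightarrow> False"
        proof -
          assume "h s = 2" "h s' = 2"
          then have "s \<in> nb ?u \<inter> {v\<in>V. h v = 2}" "s' \<in> nb ?u \<inter> {v\<in>V. h v = 2}"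
            using e1 e2 sV s'V nb_iff by auto
          then have "card {s, s'} \<le> card (nb ?u \<inter> {v\<in>V. h v = 2})"
            by (intro card_mono) (simp_all add: fin_nb)
          moreover have "?u \<in> V" using e1 edge by blast
          then have "card (nb ?u \<inter> {v\<in>V. h v = 2}) \<le> 1" using c3 hu by blast
          ultimately show False using ne by simp
        qed
        ultimately show False by blast
      qed
    qed
    show "g ` S = V1"
    proof
      show "g ` S \<subseteq> V1" using g edge unfolding V1_def by blast
      show "V1 \<subseteq> g ` S"
      proof
        fix u assume u: "u \<in> V1"
        then have uV: "u \<in> V" and hu: "h u = 1" unfolding V1_def by auto
        obtain x where x: "x \<in> D" "{u,x} \<in> E" using td_dom[OF Dt uV] by blast
        have "h x = 0 \<or> h x = 2" using h_adj[OF x(2)] hu by auto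
        then have xS: "x \<in> S" using x unfolding S_def by blast
        then have "g x = u" using gu x edge_sym hu by blast
        then show "u \<in> g ` S" using xS by blast
      qed
    qed
  qed
  then have "card S = card V1" by (rule bij_betw_same_card)
  moreover have "card D = card V1 + card S" using Dsplit card_Un_disjoint[OF finV1 finS disj] by simp
  ultimately show ?thesis unfolding V1_def by simp
qed

end



context btree begin

lemma descend: "v \<in> V \<Longrightarrow> k \<le> h v \<Longrightarrow> \<exists>y\<in>V. h y = k"
proof (induction "h v" arbitrary: v)
  case 0 then show ?case by auto
next
  case (Suc n)
  show ?case
  proof (cases "k = Suc n")
    case True then show ?thesis using Suc by metis
  next
    case False
    obtain m where m: "{v,m} \<in> E" "h m = n" using h_down[of v n] Suc(2,3) by auto
    have "k \<le> n" using False Suc(2,4) by linarith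
    then show ?thesis using Suc(1)[of m] m edge by auto
  qed
qed

lemma two_elems: "finite S \<Longrightarrow> S \<noteq> {} \<Longrightarrow> card S \<noteq> 1 \<Longrightarrow> \<exists>a b. a \<in> S \<and> b \<in> S \<and> a \<noteq> b"
proof -
  assume f: "finite S" and ne: "S \<noteq> {}" and c: "card S \<noteq> 1"
  obtain a where a: "a \<in> S" using ne by blast
  show ?thesis
  proof (rule ccontr)
    assume "\<not> ?thesis"
    then have "S = {a}" using a by blast
    then show False using c by simp
  qed
qed

lemma hc: "height_class V E k = {v\<in>V. h v = k}" unfolding height_class_def by simp

lemma th_iff: "tree_height V E \<le> 3 \<longleftrightarrow> (\<forall>v\<in>V. h v \<le> 3)"
proof -
  have eq: "{k. height_class V E k \<noteq> {}} = h ` V" unfolding hc by auto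
  have ne: "V \<noteq> {}" using tree unfolding is_tree_def by blast
  have "tree_height V E = Max (h ` V)" unfolding tree_height_def eq ..
  then show ?thesis using finV ne by simp
qed

lemma main:
  "unmixed V E \<longleftrightarrow>
           (tree_height V E \<le> 3 \<and>
            (\<forall>v \<in> height_class V E 2. card (nbhd V E v \<inter> height_class V E 1) = 1) \<and>
            (\<forall>v \<in> height_class V E 1. card (nbhd V E v \<inter> height_class V E 2) \<le> 1))"
proof
  assume um: "unmixed V E"
  have hall: "\<forall>v\<in>V. h v \<le> 3"
  proof (rule ccontr)
    assume "\<not> ?thesis"
    then obtain v where v: "v \<in> V" "\<not> h v \<le> 3" by blast
    then have "4 \<le> h v" by linarith
    then obtain y where "y \<in> V" "h y = 4" using descend v(1) by blast
    then show False using not_cond1 um by blast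
  qed
  have c2: "\<forall>v \<in> height_class V E 2. card (nbhd V E v \<inter> height_class V E 1) = 1"
  proof
    fix w assume "w \<in> height_class V E 2"
    then have w: "w \<in> V" "h w = 2" unfolding hc by auto
    obtain u where u: "{w,u} \<in> E" "h u = 1" using h_down[of w 1] w by auto
    have ne: "nb w \<inter> height_class V E 1 \<noteq> {}" using u nb_iff edge_sym edge unfolding hc by blast
    show "card (nb w \<inter> height_class V E 1) = 1"
    proof (rule ccontr)
      assume "card (nb w \<inter> height_class V E 1) \<noteq> 1"
      then obtain a b where ab: "a \<in> nb w \<inter> height_class V E 1" "b \<in> nb w \<inter> height_class V E 1" "a \<noteq> b"
        using two_elems[OF _ ne] fin_nb by auto
      then have "{w,a} \<in> E" "{w,b} \<in> E" "h a = 1" "h b = 1" using nb_iff edge_sym unfolding hc by auto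
      then show False using not_cond2[OF w] ab um by blast
    qed
  qed
  have c3: "\<forall>v \<in> height_class V E 1. card (nbhd V E v \<inter> height_class V E 2) \<le> 1"
  proof
    fix u assume "u \<in> height_class V E 1"
    then have u: "u \<in> V" "h u = 1" unfolding hc by auto
    show "card (nb u \<inter> height_class V E 2) \<le> 1"
    proof (rule ccontr)
      assume a: "\<not> card (nb u \<inter> height_class V E 2) \<le> 1"
      then have ne: "nb u \<inter> height_class V E 2 \<noteq> {}" by (metis card.empty zero_le_one)
      have c1: "card (nb u \<inter> height_class V E 2) \<noteq> 1" using a by linarith
      have fi: "finite (nb u \<inter> height_class V E 2)" using fin_nb by simp
      obtain a b where ab: "a \<in> nb u \<inter> height_class V E 2" "b \<in> nb u \<inter> height_class V E 2" "a \<noteq> b"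
        using two_elems[OF fi ne c1] by blast
      have uniq: "\<And>w a b. w \<in> V \<Longrightarrow> h w = 2 \<Longrightarrow> a \<in> nb w \<Longrightarrow> b \<in> nb w \<Longrightarrow> h a = 1 \<Longrightarrow> h b = 1 \<Longrightarrow> a = b"
      proof -
        fix w a b assume w: "w \<in> V" "h w = 2" and a: "a \<in> nb w" "b \<in> nb w" "h a = 1" "h b = 1"
        have "card (nb w \<inter> height_class V E 1) = 1" using c2 w unfolding hc by blast
        then obtain c where c: "nb w \<inter> height_class V E 1 = {c}" using card_1_singletonE by blast
        have A: "a \<in> nb w \<inter> height_class V E 1" and B: "b \<in> nb w \<inter> height_class V E 1"
          using a nb_V unfolding hc by auto
        have "a \<in> {c}" using A unfolding c .
        moreover have "b \<in> {c}" using B unfolding c .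
        ultimately show "a = b" by simp
      qed
      have x: "a \<in> nb u" "h a = 2" "b \<in> nb u" "h b = 2" using ab unfolding hc by auto
      have "\<not> unmixed V E" by (rule not_cond3[OF hall uniq u(1) u(2) x ab(3)])
      then show False using um by blast
    qed
  qed
  show "tree_height V E \<le> 3 \<and> (\<forall>v \<in> height_class V E 2. card (nbhd V E v \<inter> height_class V E 1) = 1) \<and>
            (\<forall>v \<in> height_class V E 1. card (nbhd V E v \<inter> height_class V E 2) \<le> 1)"
    using hall c2 c3 th_iff by blast
next
  assume R: "tree_height V E \<le> 3 \<and> (\<forall>v \<in> height_class V E 2. card (nbhd V E v \<inter> height_class V E 1) = 1) \<and>
            (\<forall>v \<in> height_class V E 1. card (nbhd V E v \<inter> height_class V E 2) \<le> 1)"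
  have hall: "\<forall>v\<in>V. h v \<le> 3" using R th_iff by blast
  have c2: "\<forall>w\<in>V. h w = 2 \<longrightarrow> card (nb w \<inter> {v\<in>V. h v = 1}) = 1" using R unfolding hc by blast
  have c3: "\<forall>u\<in>V. h u = 1 \<longrightarrow> card (nb u \<inter> {v\<in>V. h v = 2}) \<le> 1" using R unfolding hc by blast
  show "unmixed V E" unfolding unmixed_def using min_card[OF hall c2 c3] by simp
qed

end

theorem theorem3p37:
  fixes V :: "'a set" and E :: "'a set set"
  assumes "is_tree V E" and "balanced V E"
  shows "unmixed V E \<longleftrightarrow>
           (tree_height V E \<le> 3 \<and>
            (\<forall>v \<in> height_class V E 2. card (nbhd V E v \<inter> height_class V E 1) = 1) \<and>
            (\<forall>v \<in> height_class V E 1. card (nbhd V E v \<inter> height_class V E 2) \<le> 1))"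
proof (cases "E = {}")
  case False
  interpret btree V E using assms False by unfold_locales
  show ?thesis by (rule main)
next
  case True
  have nbe: "\<And>x. nbhd V E x = {}" unfolding nbhd_def using True by simp
  have h0: "\<And>x. vheight V E x = 0" unfolding vheight_def using nbe by simp
  have ne: "V \<noteq> {}" using assms(1) unfolding is_tree_def by blast
  have hc: "\<And>k. height_class V E k = (if k = 0 then V else {})"
    unfolding height_class_def using h0 by auto
  have "{k. height_class V E k \<noteq> {}} = {0}" using hc ne by auto
  then have th: "tree_height V E = 0" unfolding tree_height_def by simp
  have notd: "\<And>D. \<not> td_set V E D"
    unfolding td_set_def nbhd_set_def using nbe ne by simp
  have "unmixed V E" unfolding unmixed_def minimal_td_set_def using notd by blast
  then show ?thesis using th hc by simp
qed


end
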